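(* Let $V=[n]$. For every traceless self-adjoint operator $X$ on $\mathcal H_V$, $$\|X\|_{W_1}\le\|X\|_1+\|\mathrm{Tr}_1X\|_1+\|\mathrm{Tr}_{12}X\|_1+\dots+\|\mathrm{Tr}_{1\ldots n-1}X\|_1 .$$
   Context: Each site of $[n]$ carries a qudit $\mathbb C^d$; $\mathrm{Tr}_{1\ldots k}$ is the partial trace over sites $1,\dots,k$. Quantum Lipschitz constant: for self-adjoint $H$, $\|H\|_L:=2\max_{i\in V}\min\{\|H-H^{(i)}\|_\infty: H^{(i)}\text{ self-adjoint acting trivially on site }i\}$. Quantum $W_1$ norm: for traceless self-adjoint $X$, $\|X\|_{W_1}:=\max\{\mathrm{Tr}[XH]:H\text{ self-adjoint},\|H\|_L\le1\}$. *)

theory Defs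
  imports "HOL-Analysis.Analysis"
begin

text \<open>Basis configurations of the qudits on a finite site set S: a configuration
assigns to each site i in S a level x i < d, and is 0 off S.  Operators on the
Hilbert space of sites S are complex matrices indexed by configurations
(only entries at configurations in Conf S d matter).\<close>

type_synonym config = "nat \<Rightarrow> nat"
type_synonym qop = "config \<Rightarrow> config \<Rightarrow> complex"

definition Conf :: "nat set \<Rightarrow> nat \<Rightarrow> config set" where
  "Conf S d = {x. (\<forall>i\<in>S. x i < d) \<and> (\<forall>i. i \<notin> S \<longrightarrow> x i = 0)}"

definition self_adj :: "nat set \<Rightarrow> nat \<Rightarrow> qop \<Rightarrow> bool" where
  "self_adj S d A \<longleftrightarrow> (\<forall>x\<in>Conf S d. \<forall>y\<in>Conf S d. A y x = cnj (A x y))"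

definition mtrace :: "nat set \<Rightarrow> nat \<Rightarrow> qop \<Rightarrow> complex" where
  "mtrace S d A = (\<Sum>x\<in>Conf S d. A x x)"

definition mmult :: "nat set \<Rightarrow> nat \<Rightarrow> qop \<Rightarrow> qop \<Rightarrow> qop" where
  "mmult S d A B = (\<lambda>x y. if x \<in> Conf S d \<and> y \<in> Conf S d
      then (\<Sum>z\<in>Conf S d. A x z * B z y) else 0)"

definition adj :: "qop \<Rightarrow> qop" where
  "adj A = (\<lambda>x y. cnj (A y x))"

definition op_norm :: "nat set \<Rightarrow> nat \<Rightarrow> qop \<Rightarrow> real" where
  "op_norm S d A = Sup {sqrt (\<Sum>x\<in>Conf S d. (cmod (\<Sum>y\<in>Conf S d. A x y * v y))^2) | v.
      (\<Sum>x\<in>Conf S d. (cmod (v x))^2) \<le> 1}"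

definition psd :: "nat set \<Rightarrow> nat \<Rightarrow> qop \<Rightarrow> bool" where
  "psd S d P \<longleftrightarrow> self_adj S d P \<and>
     (\<forall>v. 0 \<le> Re (\<Sum>x\<in>Conf S d. \<Sum>y\<in>Conf S d. cnj (v x) * P x y * v y))"

definition supported :: "nat set \<Rightarrow> nat \<Rightarrow> qop \<Rightarrow> bool" where
  "supported S d P \<longleftrightarrow> (\<forall>x y. x \<notin> Conf S d \<or> y \<notin> Conf S d \<longrightarrow> P x y = 0)"

definition abs_op :: "nat set \<Rightarrow> nat \<Rightarrow> qop \<Rightarrow> qop" where
  "abs_op S d A = (THE P. supported S d P \<and> psd S d P \<and> mmult S d P P = mmult S d (adj A) A)"

definition trace_norm :: "nat set \<Rightarrow> nat \<Rightarrow> qop \<Rightarrow> real" where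
  "trace_norm S d A = Re (mtrace S d (abs_op S d A))"

definition merge :: "nat set \<Rightarrow> config \<Rightarrow> config \<Rightarrow> config" where
  "merge T z x = (\<lambda>i. if i \<in> T then z i else x i)"

text \<open>Partial trace over the sites in T: maps operators on S to operators on S - T.\<close>
definition ptrace :: "nat set \<Rightarrow> nat \<Rightarrow> qop \<Rightarrow> qop" where
  "ptrace T d A = (\<lambda>x y. \<Sum>z\<in>Conf T d. A (merge T z x) (merge T z y))"

text \<open>H acts trivially on site i: H = I_i \<otimes> K for some operator K on the other sites.\<close>
definition acts_trivially :: "nat set \<Rightarrow> nat \<Rightarrow> nat \<Rightarrow> qop \<Rightarrow> bool" where
  "acts_trivially S d i H \<longleftrightarrow> (\<exists>K. \<forall>x\<in>Conf S d. \<forall>y\<in>Conf S d.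
      H x y = (if x i = y i then K (x(i:=0)) (y(i:=0)) else 0))"

definition lip_const :: "nat set \<Rightarrow> nat \<Rightarrow> qop \<Rightarrow> real" where
  "lip_const S d H = 2 * Max ((\<lambda>i. Inf {op_norm S d (\<lambda>x y. H x y - H' x y) | H'.
      self_adj S d H' \<and> acts_trivially S d i H'}) ` S)"

definition W1 :: "nat set \<Rightarrow> nat \<Rightarrow> qop \<Rightarrow> real" where
  "W1 S d X = Sup {Re (mtrace S d (mmult S d X H)) | H. self_adj S d H \<and> lip_const S d H \<le> 1}"

end

theory Submission
  imports Defs
begin


definition ip :: "'a set \<Rightarrow> ('a \<Rightarrow> complex) \<Rightarrow> ('a \<Rightarrow> complex) \<Rightarrow> complex" where
  "ip I u v = (\<Sum>x\<in>I. cnj (u x) * v x)"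
definition app :: "'a set \<Rightarrow> ('a \<Rightarrow> 'a \<Rightarrow> complex) \<Rightarrow> ('a \<Rightarrow> complex) \<Rightarrow> ('a \<Rightarrow> complex)" where
  "app I A v = (\<lambda>x. \<Sum>y\<in>I. A x y * v y)"
definition herm :: "'a set \<Rightarrow> ('a \<Rightarrow> 'a \<Rightarrow> complex) \<Rightarrow> bool" where
  "herm I A \<longleftrightarrow> (\<forall>x\<in>I. \<forall>y\<in>I. A y x = cnj (A x y))"
definition nrm2 :: "'a set \<Rightarrow> ('a \<Rightarrow> complex) \<Rightarrow> real" where
  "nrm2 I v = (\<Sum>x\<in>I. (cmod (v x))^2)"
definition qf :: "'a set \<Rightarrow> ('a \<Rightarrow> 'a \<Rightarrow> complex) \<Rightarrow> ('a \<Rightarrow> complex) \<Rightarrow> real" where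
  "qf I A v = Re (ip I v (app I A v))"
definition orthonormal :: "'a set \<Rightarrow> nat \<Rightarrow> (nat \<Rightarrow> 'a \<Rightarrow> complex) \<Rightarrow> bool" where
  "orthonormal I m u \<longleftrightarrow> (\<forall>i<m. \<forall>j<m. ip I (u i) (u j) = (if i = j then 1 else 0))"
definition decomp :: "'a set \<Rightarrow> nat \<Rightarrow> (nat \<Rightarrow> real) \<Rightarrow> (nat \<Rightarrow> 'a \<Rightarrow> complex) \<Rightarrow> ('a \<Rightarrow> 'a \<Rightarrow> complex) \<Rightarrow> bool" where
  "decomp I m lam u A \<longleftrightarrow> (\<forall>x\<in>I. \<forall>y\<in>I. A x y = (\<Sum>j<m. complex_of_real (lam j) * u j x * cnj (u j y)))"

lemma ip_self: "ip I v v = complex_of_real (nrm2 I v)"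
  unfolding ip_def nrm2_def by (simp add: complex_norm_square mult.commute del: of_real_power)

lemma nrm2_nonneg: "0 \<le> nrm2 I v"
  unfolding nrm2_def by (simp add: sum_nonneg)

lemma ip_cnj: "cnj (ip I u v) = ip I v u"
  unfolding ip_def by (simp add: mult.commute)

lemma ip_add2: "ip I u (\<lambda>x. v x + w x) = ip I u v + ip I u w"
  unfolding ip_def by (simp add: distrib_left sum.distrib)
lemma ip_diff2: "ip I u (\<lambda>x. v x - w x) = ip I u v - ip I u w"
  unfolding ip_def by (simp add: right_diff_distrib sum_subtractf)
lemma ip_scale2: "ip I u (\<lambda>x. c * v x) = c * ip I u v"
  unfolding ip_def by (simp add: sum_distrib_left algebra_simps)
lemma ip_add1: "ip I (\<lambda>x. v x + w x) u = ip I v u + ip I w u"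
  unfolding ip_def by (simp add: distrib_right sum.distrib)
lemma ip_diff1: "ip I (\<lambda>x. v x - w x) u = ip I v u - ip I w u"
  unfolding ip_def by (simp add: left_diff_distrib sum_subtractf)
lemma ip_scale1: "ip I (\<lambda>x. c * v x) u = cnj c * ip I v u"
  unfolding ip_def by (simp add: sum_distrib_left algebra_simps)

lemma app_add: "app I A (\<lambda>x. v x + w x) = (\<lambda>x. app I A v x + app I A w x)"
  unfolding app_def by (simp add: distrib_left sum.distrib)
lemma app_diff: "app I A (\<lambda>x. v x - w x) = (\<lambda>x. app I A v x - app I A w x)"
  unfolding app_def by (simp add: right_diff_distrib sum_subtractf)
lemma app_scale: "app I A (\<lambda>x. c * v x) = (\<lambda>x. c * app I A v x)"
  unfolding app_def by (simp add: sum_distrib_left algebra_simps)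

lemma herm_ip: assumes "herm I A" shows "ip I u (app I A v) = ip I (app I A u) v"
proof -
  have "ip I u (app I A v) = (\<Sum>x\<in>I. \<Sum>y\<in>I. cnj (u x) * A x y * v y)"
    unfolding ip_def app_def by (simp add: sum_distrib_left algebra_simps)
  also have "\<dots> = (\<Sum>y\<in>I. \<Sum>x\<in>I. cnj (u x) * A x y * v y)" by (rule sum.swap)
  also have "\<dots> = ip I (app I A u) v"
  proof -
    have "\<And>y. y \<in> I \<Longrightarrow> (\<Sum>x\<in>I. cnj (u x) * A x y * v y) = cnj (app I A u y) * v y"
    proof -
      fix y assume y: "y \<in> I"
      have "cnj (app I A u y) = (\<Sum>x\<in>I. cnj (A y x) * cnj (u x))" unfolding app_def by simp
      also have "\<dots> = (\<Sum>x\<in>I. A x y * cnj (u x))"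
      proof (rule sum.cong[OF refl])
        fix x assume x: "x \<in> I"
        have "A y x = cnj (A x y)" using assms x y unfolding herm_def by blast
        then show "cnj (A y x) * cnj (u x) = A x y * cnj (u x)" by simp
      qed
      finally show "(\<Sum>x\<in>I. cnj (u x) * A x y * v y) = cnj (app I A u y) * v y"
        by (simp add: sum_distrib_left sum_distrib_right mult.commute mult.left_commute)
    qed
    then show ?thesis unfolding ip_def by (rule sum.cong[OF refl])
  qed
  finally show ?thesis .
qed

lemma herm_ip_real: assumes "herm I A" shows "ip I v (app I A v) = complex_of_real (qf I A v)"
proof -
  have "cnj (ip I v (app I A v)) = ip I v (app I A v)"
    by (simp add: ip_cnj herm_ip[OF assms])
  then have "Im (ip I v (app I A v)) = 0" by (metis cnj.sel(2) complex.expand cnj.sel(1) neg_equal_zero)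
  then show ?thesis unfolding qf_def by (simp add: complex_eq_iff)
qed

lemma nrm2_zero: assumes "finite I" "nrm2 I v = 0" "x \<in> I" shows "v x = 0"
proof -
  have "\<forall>x\<in>I. (cmod (v x))^2 = 0"
    using assms sum_nonneg_eq_0_iff[of I "\<lambda>x. (cmod (v x))^2"] unfolding nrm2_def by auto
  then have "(cmod (v x))^2 = 0" using assms(3) by blast
  then show ?thesis by simp
qed


lemma expand_q:
  assumes "herm I A"
  shows "ip I (\<lambda>z. u z + c * w z) (app I A (\<lambda>z. u z + c * w z)) =
    ip I u (app I A u) + c * ip I u (app I A w) + cnj c * cnj (ip I u (app I A w))
    + cnj c * c * ip I w (app I A w)"
proof -
  have e: "app I A (\<lambda>z. u z + c * w z) = (\<lambda>z. app I A u z + c * app I A w z)"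
    by (simp add: app_add app_scale)
  have "cnj (ip I u (app I A w)) = ip I w (app I A u)"
    by (simp add: ip_cnj herm_ip[OF assms])
  then show ?thesis unfolding e
    by (simp add: ip_add1 ip_add2 ip_scale1 ip_scale2 algebra_simps)
qed

lemma nrm2_ip: "nrm2 I v = Re (ip I v v)"
  by (simp add: ip_self)

lemma finite_subseq:
  fixes V :: "nat \<Rightarrow> 'a \<Rightarrow> complex"
  assumes "finite I" "\<And>k x. x \<in> I \<Longrightarrow> cmod (V k x) \<le> (B::real)"
  shows "\<exists>r l. strict_mono r \<and> (\<forall>x\<in>I. (\<lambda>k. V (r k) x) \<longlonglongrightarrow> l x)"
  using assms
proof (induction I rule: finite_induct)
  case empty
  show ?case by (rule exI[of _ id], rule exI, simp add: strict_mono_def)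
next
  case (insert a F)
  then obtain r1 l1 where r1: "strict_mono r1" and l1: "\<forall>x\<in>F. (\<lambda>k. V (r1 k) x) \<longlonglongrightarrow> l1 x"
    by blast
  have "bounded (range (\<lambda>k. V (r1 k) a))"
    using insert(4)[of a] by (auto simp: bounded_iff)
  then obtain l2 r2 where r2: "strict_mono r2" and l2: "((\<lambda>k. V (r1 k) a) \<circ> r2) \<longlonglongrightarrow> l2"
    using bounded_imp_convergent_subsequence by blast
  have "strict_mono (r1 \<circ> r2)" using r1 r2 by (simp add: strict_mono_o)
  moreover have "\<forall>x\<in>insert a F. (\<lambda>k. V ((r1 \<circ> r2) k) x) \<longlonglongrightarrow> (l1(a := l2)) x"
  proof
    fix x assume x: "x \<in> insert a F"
    show "(\<lambda>k. V ((r1 \<circ> r2) k) x) \<longlonglongrightarrow> (l1(a := l2)) x"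
    proof (cases "x = a")
      case True then show ?thesis using l2 by (simp add: o_def)
    next
      case False
      then have "x \<in> F" using x by auto
      then have "((\<lambda>k. V (r1 k) x) \<circ> r2) \<longlonglongrightarrow> l1 x" using l1 r2 LIMSEQ_subseq_LIMSEQ by blast
      then show ?thesis using False by (simp add: o_def)
    qed
  qed
  ultimately show ?case by blast
qed

lemma unit_bound: assumes "finite I" "nrm2 I v = 1" "x \<in> I" shows "cmod (v x) \<le> 1"
proof -
  have "(cmod (v x))^2 \<le> nrm2 I v" unfolding nrm2_def
    using assms by (intro member_le_sum) auto
  then have "(cmod (v x))^2 \<le> 1^2" using assms by simp
  then show ?thesis by (rule power2_le_imp_le) simp
qed

lemma qf_bound:
  assumes "finite I" "nrm2 I v = 1"
  shows "\<bar>qf I A v\<bar> \<le> (\<Sum>x\<in>I. \<Sum>y\<in>I. cmod (A x y))"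
proof -
  have "\<bar>qf I A v\<bar> \<le> cmod (ip I v (app I A v))" unfolding qf_def by (rule abs_Re_le_cmod)
  also have "\<dots> \<le> (\<Sum>x\<in>I. cmod (cnj (v x) * app I A v x))" unfolding ip_def by (rule norm_sum)
  also have "\<dots> \<le> (\<Sum>x\<in>I. \<Sum>y\<in>I. cmod (A x y))"
  proof (rule sum_mono)
    fix x assume x: "x \<in> I"
    have "cmod (cnj (v x) * app I A v x) = cmod (v x) * cmod (app I A v x)" by (simp add: norm_mult)
    also have "\<dots> \<le> 1 * cmod (app I A v x)"
      using unit_bound[OF assms x] by (intro mult_right_mono) auto
    also have "\<dots> \<le> (\<Sum>y\<in>I. cmod (A x y * v y))" unfolding app_def by (simp add: norm_sum)
    also have "\<dots> \<le> (\<Sum>y\<in>I. cmod (A x y))"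
    proof (rule sum_mono)
      fix y assume y: "y \<in> I"
      have "cmod (A x y * v y) = cmod (A x y) * cmod (v y)" by (simp add: norm_mult)
      also have "\<dots> \<le> cmod (A x y) * 1" using unit_bound[OF assms y] by (intro mult_left_mono) auto
      finally show "cmod (A x y * v y) \<le> cmod (A x y)" by simp
    qed
    finally show "cmod (cnj (v x) * app I A v x) \<le> (\<Sum>y\<in>I. cmod (A x y))" .
  qed
  finally show ?thesis .
qed

lemma scale_facts:
  fixes s :: real
  shows "nrm2 I (\<lambda>x. complex_of_real s * v x) = s^2 * nrm2 I v"
    and "qf I A (\<lambda>x. complex_of_real s * v x) = s^2 * qf I A v"
proof -
  show "nrm2 I (\<lambda>x. complex_of_real s * v x) = s^2 * nrm2 I v"
    unfolding nrm2_ip by (simp add: ip_scale1 ip_scale2 power2_eq_square)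
  show "qf I A (\<lambda>x. complex_of_real s * v x) = s^2 * qf I A v"
    unfolding qf_def by (simp add: app_scale ip_scale1 ip_scale2 power2_eq_square)
qed

lemma qf_zero: assumes "finite I" "nrm2 I v = 0" shows "qf I A v = 0"
proof -
  have "\<forall>x\<in>I. v x = 0" using nrm2_zero[OF assms] by blast
  then show ?thesis unfolding qf_def ip_def by simp
qed

lemma max_eigen:
  assumes fin: "finite I" and ne: "I \<noteq> {}" and h: "herm I A"
  shows "\<exists>v M. nrm2 I v = 1 \<and> (\<forall>x\<in>I. app I A v x = complex_of_real M * v x)
     \<and> (\<forall>y. qf I A y \<le> M * nrm2 I y)"
proof -
  define Q where "Q = {qf I A v | v. nrm2 I v = 1}"
  define B where "B = (\<Sum>x\<in>I. \<Sum>y\<in>I. cmod (A x y))"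
  obtain x0 where x0: "x0 \<in> I" using ne by blast
  have e1: "(\<lambda>x. (cmod (if x = x0 then 1 else 0::complex))^2) = (\<lambda>x. if x = x0 then 1 else 0)"
    by auto
  have "nrm2 I (\<lambda>z. if z = x0 then 1 else 0) = 1"
    unfolding nrm2_def e1 using fin x0 by simp
  then have Qne: "Q \<noteq> {}" unfolding Q_def by blast
  have Qbdd: "bdd_above Q" unfolding Q_def bdd_above_def
    using qf_bound[OF fin] by (intro exI[of _ B]) (auto simp: B_def abs_le_iff)
  define M where "M = Sup Q"
  have "\<forall>k. \<exists>v. nrm2 I v = 1 \<and> M - 1 / real (Suc k) < qf I A v"
  proof
    fix k
    have "M - 1 / real (Suc k) < M" by simp
    then obtain q where "q \<in> Q" "M - 1 / real (Suc k) < q"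
      using less_cSupD[OF Qne] unfolding M_def by blast
    then show "\<exists>v. nrm2 I v = 1 \<and> M - 1 / real (Suc k) < qf I A v" unfolding Q_def by blast
  qed
  then obtain V where V1: "\<And>k. nrm2 I (V k) = 1" and V2: "\<And>k. M - 1 / real (Suc k) < qf I A (V k)"
    by metis
  have V3: "\<And>k. qf I A (V k) \<le> M" unfolding M_def
    using V1 Qbdd by (intro cSup_upper) (auto simp: Q_def)
  obtain r l where r: "strict_mono r" and l: "\<forall>x\<in>I. (\<lambda>k. V (r k) x) \<longlonglongrightarrow> l x"
    using finite_subseq[OF fin, of V 1] unit_bound[OF fin V1] by blast
  have t1: "(\<lambda>k. nrm2 I (V (r k))) \<longlonglongrightarrow> nrm2 I l"
    unfolding nrm2_def using l by (intro tendsto_intros) auto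
  have "(\<lambda>k. nrm2 I (V (r k))) = (\<lambda>k. 1)" using V1 by simp
  then have nl: "nrm2 I l = 1" using t1 LIMSEQ_unique[OF _ tendsto_const[of 1]] by metis
  have t2: "(\<lambda>k. qf I A (V (r k))) \<longlonglongrightarrow> qf I A l"
    unfolding qf_def ip_def app_def using l by (intro tendsto_intros) auto
  have t3: "(\<lambda>k. qf I A (V (r k))) \<longlonglongrightarrow> M"
  proof (rule tendsto_sandwich[of "\<lambda>k. M - 1 / real (Suc k)" _ _ "\<lambda>k. M"])
    show "\<forall>\<^sub>F k in sequentially. M - 1 / real (Suc k) \<le> qf I A (V (r k))"
    proof (rule always_eventually, rule allI)
      fix k
      have "1 / real (Suc (r k)) \<le> 1 / real (Suc k)" using seq_suble[OF r, of k]
        by (simp add: frac_le)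
      then show "M - 1 / real (Suc k) \<le> qf I A (V (r k))" using V2[of "r k"] by linarith
    qed
    show "\<forall>\<^sub>F k in sequentially. qf I A (V (r k)) \<le> M" using V3 by simp
    show "(\<lambda>k. M) \<longlonglongrightarrow> M" by simp
    have "(\<lambda>k. 1 / real (Suc k)) \<longlonglongrightarrow> 0" by (rule LIMSEQ_Suc[OF lim_const_over_n])
    then show "(\<lambda>k. M - 1 / real (Suc k)) \<longlonglongrightarrow> M"
      using tendsto_diff[OF tendsto_const[of M]] by fastforce
  qed
  have ql: "qf I A l = M" using t2 t3 LIMSEQ_unique by blast
  have bound: "\<forall>y. qf I A y \<le> M * nrm2 I y"
  proof
    fix y
    show "qf I A y \<le> M * nrm2 I y"
    proof (cases "nrm2 I y = 0")
      case True then show ?thesis using qf_zero[OF fin True] by simp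
    next
      case False
      then have pos: "0 < nrm2 I y" using nrm2_nonneg[of I y] by linarith
      define s where "s = 1 / sqrt (nrm2 I y)"
      have s2: "s^2 * nrm2 I y = 1" unfolding s_def using pos
        by (simp add: power_divide)
      have mem: "qf I A (\<lambda>x. complex_of_real s * y x) \<in> Q" unfolding Q_def mem_Collect_eq
        by (rule exI[of _ "\<lambda>x. complex_of_real s * y x"]) (simp add: scale_facts s2)
      have "qf I A (\<lambda>x. complex_of_real s * y x) \<le> M" unfolding M_def
        using Qbdd mem by (intro cSup_upper)
      then have "s^2 * qf I A y \<le> M" by (simp add: scale_facts)
      then have "nrm2 I y * (s^2 * qf I A y) \<le> nrm2 I y * M" using pos by (intro mult_left_mono) auto
      moreover have "qf I A y = qf I A y * (s^2 * nrm2 I y)" using s2 by simp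
      moreover have "qf I A y * (s^2 * nrm2 I y) = nrm2 I y * (s^2 * qf I A y)" by (simp only: ac_simps)
      moreover have "nrm2 I y * M = M * nrm2 I y" by (rule mult.commute)
      ultimately show ?thesis by linarith
    qed
  qed
  define Av where "Av = app I A l"
  define rr where "rr = (\<lambda>x. Av x - complex_of_real M * l x)"
  have ipvAv: "ip I l Av = complex_of_real M" unfolding Av_def using herm_ip_real[OF h] ql by simp
  have ipll: "ip I l l = 1" using ip_self[of I l] nl by simp
  have ipvr: "ip I l rr = 0" unfolding rr_def by (simp add: ip_diff2 ip_scale2 ipvAv ipll)
  have iprv: "ip I rr l = 0" using ip_cnj[of I l rr] ipvr by simp
  have Aveq: "Av = (\<lambda>x. rr x + complex_of_real M * l x)" unfolding rr_def by simp
  define R where "R = nrm2 I rr"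
  have iprAv: "ip I rr Av = complex_of_real R"
    by (subst Aveq) (simp add: ip_add2 ip_scale2 iprv ip_self R_def)
  have ipvAr: "ip I l (app I A rr) = complex_of_real R"
    using herm_ip[OF h, of l rr] ip_cnj[of I rr Av] iprAv unfolding Av_def by simp
  have key: "\<And>t::real. 2 * t * R \<le> t^2 * (M * R - qf I A rr)"
  proof -
    fix t :: real
    let ?y = "\<lambda>z. l z + complex_of_real t * rr z"
    have q1: "ip I ?y (app I A ?y) = complex_of_real (M + 2 * t * R + t^2 * qf I A rr)"
      unfolding expand_q[OF h] using ipvAr herm_ip_real[OF h, of l] herm_ip_real[OF h, of rr] ql
      by (simp add: power2_eq_square algebra_simps)
    have n1: "ip I ?y ?y = complex_of_real (1 + t^2 * R)"
      by (simp add: ip_add1 ip_add2 ip_scale1 ip_scale2 ipvr iprv ipll ip_self R_def nl power2_eq_square)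
    have "qf I A ?y \<le> M * nrm2 I ?y" using bound by blast
    then have "M + 2 * t * R + t^2 * qf I A rr \<le> M * (1 + t^2 * R)"
      unfolding qf_def nrm2_ip q1 n1 by simp
    then show "2 * t * R \<le> t^2 * (M * R - qf I A rr)" by (simp add: algebra_simps)
  qed
  have R0: "R = 0"
  proof (rule ccontr)
    assume "R \<noteq> 0"
    then have Rp: "R > 0" using nrm2_nonneg[of I rr] unfolding R_def by linarith
    define C where "C = \<bar>M * R - qf I A rr\<bar> + 1"
    have Cp: "C > 0" unfolding C_def by simp
    define t where "t = R / C"
    have tp: "t > 0" unfolding t_def using Rp Cp by simp
    have "2 * t * R \<le> t^2 * (M * R - qf I A rr)" by (rule key)
    also have "\<dots> \<le> t^2 * C" unfolding C_def by (intro mult_left_mono) auto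
    also have "\<dots> = t * R" unfolding t_def using Cp by (simp add: power2_eq_square)
    finally have "2 * t * R \<le> t * R" .
    then show False using tp Rp by (simp add: mult_le_cancel_left_pos)
  qed
  have "\<forall>x\<in>I. app I A l x = complex_of_real M * l x"
  proof
    fix x assume x: "x \<in> I"
    have "rr x = 0" using nrm2_zero[OF fin _ x] R0 unfolding R_def by blast
    then show "app I A l x = complex_of_real M * l x" unfolding rr_def Av_def by simp
  qed
  then show ?thesis using nl bound by blast
qed


lemma ip_cong2: "(\<And>x. x \<in> I \<Longrightarrow> f x = g x) \<Longrightarrow> ip I u f = ip I u g"
  unfolding ip_def by (rule sum.cong) auto
lemma ip_cong1: "(\<And>x. x \<in> I \<Longrightarrow> f x = g x) \<Longrightarrow> ip I f u = ip I g u"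
  unfolding ip_def by (rule sum.cong) auto

lemma ip_sum2: "ip I u (\<lambda>x. \<Sum>j\<in>J. f j x) = (\<Sum>j\<in>J. ip I u (f j))"
  unfolding ip_def by (simp add: sum_distrib_left) (rule sum.swap)
lemma ip_sum1: "ip I (\<lambda>x. \<Sum>j\<in>J. f j x) u = (\<Sum>j\<in>J. ip I (f j) u)"
  unfolding ip_def by (simp add: sum_distrib_right) (rule sum.swap)

lemma ip_delta:
  assumes "finite I" "x0 \<in> I"
  shows "ip I (\<lambda>z. if z = x0 then 1 else 0) f = f x0"
proof -
  have e: "(\<lambda>z. cnj (if z = x0 then 1 else 0) * f z) = (\<lambda>z. if z = x0 then f z else 0)" by auto
  show ?thesis unfolding ip_def e using assms by simp
qed

lemma app_delta:
  assumes "finite I" "y0 \<in> I"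
  shows "app I A (\<lambda>z. if z = y0 then 1 else 0) x = A x y0"
proof -
  have e: "(\<lambda>y. A x y * (if y = y0 then 1 else 0)) = (\<lambda>y. if y = y0 then A x y else 0)" by auto
  show ?thesis unfolding app_def e using assms by simp
qed

lemma nrm2_delta:
  assumes "finite I" "x0 \<in> I"
  shows "nrm2 I (\<lambda>z. if z = x0 then 1 else 0) = 1"
proof -
  have e1: "(\<lambda>x. (cmod (if x = x0 then 1 else 0::complex))^2) = (\<lambda>x. if x = x0 then 1 else 0)"
    by auto
  show ?thesis unfolding nrm2_def e1 using assms by simp
qed

lemma herm_neg: assumes "herm I A" shows "herm I (\<lambda>x y. - A x y)"
  unfolding herm_def
proof (intro ballI)
  fix x y assume "x \<in> I" "y \<in> I"
  then have "A y x = cnj (A x y)" using assms unfolding herm_def by blast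
  then show "- A y x = cnj (- A x y)" by simp
qed

lemma eigen_nonzero:
  assumes fin: "finite I" and h: "herm I A" and x0: "x0 \<in> I" and y0: "y0 \<in> I" and nz: "A x0 y0 \<noteq> 0"
  shows "\<exists>v \<mu>. nrm2 I v = 1 \<and> \<mu> \<noteq> 0 \<and> (\<forall>x\<in>I. app I A v x = complex_of_real \<mu> * v x)"
proof -
  have ne: "I \<noteq> {}" using x0 by blast
  obtain v M where v: "nrm2 I v = 1" "\<forall>x\<in>I. app I A v x = complex_of_real M * v x"
    and vb: "\<forall>y. qf I A y \<le> M * nrm2 I y"
    using max_eigen[OF fin ne h] by blast
  show ?thesis
  proof (cases "M = 0")
    case False then show ?thesis using v by blast
  next
    case M0: True
    obtain v' M' where v': "nrm2 I v' = 1" "\<forall>x\<in>I. app I (\<lambda>x y. - A x y) v' x = complex_of_real M' * v' x"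
      and vb': "\<forall>y. qf I (\<lambda>x y. - A x y) y \<le> M' * nrm2 I y"
      using max_eigen[OF fin ne herm_neg[OF h]] by blast
    have appneg: "\<And>w x. app I (\<lambda>x y. - A x y) w x = - app I A w x"
      unfolding app_def by (simp add: sum_negf)
    show ?thesis
    proof (cases "M' = 0")
      case False
      have "\<forall>x\<in>I. app I A v' x = complex_of_real (- M') * v' x"
        using v'(2) appneg by (metis minus_equation_iff mult_minus_left of_real_minus)
      then show ?thesis using v'(1) False by (intro exI[of _ v'] exI[of _ "-M'"]) simp
    next
      case M'0: True
      have qneg: "\<And>w. qf I (\<lambda>x y. - A x y) w = - qf I A w"
        unfolding qf_def appneg by (simp add: ip_def sum_negf)
      have q0: "\<And>w. qf I A w = 0"
      proof -
        fix w
        have "qf I A w \<le> 0" using vb M0 by (metis mult_zero_left)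
        moreover have "- qf I A w \<le> 0" using vb' M'0 qneg by (metis mult_zero_left)
        ultimately show "qf I A w = 0" by simp
      qed
      define ex where "ex = (\<lambda>z. if z = x0 then 1 else (0::complex))"
      define ey where "ey = (\<lambda>z. if z = y0 then 1 else (0::complex))"
      define z where "z = ip I ex (app I A ey)"
      have zval: "z = A x0 y0" unfolding z_def ex_def ey_def
        using ip_delta[OF fin x0] app_delta[OF fin y0] by simp
      have pol: "\<And>c. Re (c * z) = 0"
      proof -
        fix c
        have "complex_of_real (qf I A (\<lambda>t. ex t + c * ey t)) =
          ip I ex (app I A ex) + c * z + cnj c * cnj z + cnj c * c * ip I ey (app I A ey)"
          using herm_ip_real[OF h] expand_q[OF h, of ex c ey] unfolding z_def by metis
        then have "complex_of_real 0 = complex_of_real (qf I A ex) + c * z + cnj c * cnj z + cnj c * c * complex_of_real (qf I A ey)"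
          using herm_ip_real[OF h] q0 by metis
        then have "0 = c * z + cnj (c * z)" using q0 by simp
        then have "Re (c * z + cnj (c * z)) = 0" by simp
        then show "Re (c * z) = 0" by simp
      qed
      have "Re z = 0" using pol[of 1] by simp
      moreover have "Im z = 0" using pol[of "\<i>"] by simp
      ultimately have "z = 0" by (simp add: complex_eq_iff)
      then show ?thesis using zval nz by simp
    qed
  qed
qed

lemma decomp_eigen:
  assumes fin: "finite I" and o: "orthonormal I m u" and d: "decomp I m lam u A" and i: "i < m" and x: "x \<in> I"
  shows "app I A (u i) x = complex_of_real (lam i) * u i x"
proof -
  have "app I A (u i) x = (\<Sum>y\<in>I. (\<Sum>j<m. complex_of_real (lam j) * u j x * cnj (u j y)) * u i y)"
    unfolding app_def using d x unfolding decomp_def by (intro sum.cong) auto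
  also have "\<dots> = (\<Sum>j<m. complex_of_real (lam j) * u j x * ip I (u j) (u i))"
    unfolding ip_def by (simp add: sum_distrib_right sum_distrib_left mult.assoc) (rule sum.swap)
  also have "\<dots> = (\<Sum>j<m. if j = i then complex_of_real (lam j) * u j x else 0)"
    using o i unfolding orthonormal_def by (intro sum.cong) auto
  also have "\<dots> = complex_of_real (lam i) * u i x" using i by simp
  finally show ?thesis .
qed

lemma bessel:
  assumes fin: "finite I" and o: "orthonormal I m u"
  shows "(\<Sum>j<m. (cmod (ip I (u j) e))^2) \<le> nrm2 I e"
proof -
  define c where "c = (\<lambda>j. ip I (u j) e)"
  define w where "w = (\<lambda>x. e x - (\<Sum>j<m. c j * u j x))"
  have A: "ip I (\<lambda>x. \<Sum>j<m. c j * u j x) (\<lambda>x. \<Sum>j<m. c j * u j x) = (\<Sum>j<m. cnj (c j) * c j)"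
  proof -
    have "ip I (\<lambda>x. \<Sum>j<m. c j * u j x) (\<lambda>x. \<Sum>j<m. c j * u j x)
       = (\<Sum>i<m. \<Sum>j<m. cnj (c i) * c j * ip I (u i) (u j))"
      by (simp add: ip_sum1 ip_sum2 ip_scale1 ip_scale2 sum_distrib_left mult.assoc)
    also have "\<dots> = (\<Sum>i<m. \<Sum>j<m. if i = j then cnj (c i) * c j else 0)"
      using o unfolding orthonormal_def by (intro sum.cong refl) auto
    also have "\<dots> = (\<Sum>j<m. cnj (c j) * c j)" by simp
    finally show ?thesis .
  qed
  have B: "ip I e (\<lambda>x. \<Sum>j<m. c j * u j x) = (\<Sum>j<m. cnj (c j) * c j)"
  proof -
    have "\<And>j. ip I e (u j) = cnj (c j)" unfolding c_def by (simp add: ip_cnj)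
    then show ?thesis by (simp add: ip_sum2 ip_scale2 mult.commute)
  qed
  have C: "ip I (\<lambda>x. \<Sum>j<m. c j * u j x) e = (\<Sum>j<m. cnj (c j) * c j)"
    by (simp add: ip_sum1 ip_scale1 c_def)
  have "ip I w w = ip I e e - (\<Sum>j<m. cnj (c j) * c j)"
    unfolding w_def by (simp add: ip_diff1 ip_diff2 A B C)
  moreover have "(\<Sum>j<m. cnj (c j) * c j) = complex_of_real (\<Sum>j<m. (cmod (c j))^2)"
    by (simp add: complex_norm_square mult.commute del: of_real_power)
  ultimately have "ip I w w = complex_of_real (nrm2 I e - (\<Sum>j<m. (cmod (c j))^2))"
    by (simp add: ip_self)
  then have "nrm2 I w = nrm2 I e - (\<Sum>j<m. (cmod (c j))^2)"
    unfolding nrm2_ip by simp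
  then show ?thesis using nrm2_nonneg[of I w] unfolding c_def by linarith
qed

lemma orthonormal_card:
  assumes fin: "finite I" and o: "orthonormal I m u"
  shows "m \<le> card I"
proof -
  have "real m = (\<Sum>j<m. nrm2 I (u j))"
  proof -
    have "\<And>j. j < m \<Longrightarrow> nrm2 I (u j) = 1"
      using o ip_self[of I] unfolding orthonormal_def by (metis of_real_eq_1_iff)
    then show ?thesis by simp
  qed
  also have "\<dots> = (\<Sum>x\<in>I. \<Sum>j<m. (cmod (u j x))^2)" unfolding nrm2_def by (rule sum.swap)
  also have "\<dots> \<le> (\<Sum>x\<in>I. 1)"
  proof (rule sum_mono)
    fix x assume x: "x \<in> I"
    have "(\<Sum>j<m. (cmod (u j x))^2) = (\<Sum>j<m. (cmod (ip I (u j) (\<lambda>z. if z = x then 1 else 0)))^2)"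
    proof (rule sum.cong[OF refl])
      fix j
      have "ip I (u j) (\<lambda>z. if z = x then 1 else 0) = cnj (u j x)"
        using ip_delta[OF fin x, of "u j"] ip_cnj[of I] by metis
      then show "(cmod (u j x))^2 = (cmod (ip I (u j) (\<lambda>z. if z = x then 1 else 0)))^2" by simp
    qed
    also have "\<dots> \<le> 1" using bessel[OF fin o] nrm2_delta[OF fin x] by metis
    finally show "(\<Sum>j<m. (cmod (u j x))^2) \<le> 1" .
  qed
  finally show ?thesis by simp
qed


lemma orthonormal_cons:
  assumes o: "orthonormal I m u" and v: "nrm2 I v = 1" and p: "\<forall>j<m. ip I v (u j) = 0"
  shows "orthonormal I (Suc m) (case_nat v u)"
  unfolding orthonormal_def
proof (intro allI impI)
  fix i j assume i: "i < Suc m" and j: "j < Suc m"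
  show "ip I (case_nat v u i) (case_nat v u j) = (if i = j then 1 else 0)"
  proof (cases i)
    case 0
    then show ?thesis
    proof (cases j)
      case 0 then show ?thesis using \<open>i = 0\<close> v ip_self[of I v] by simp
    next
      case (Suc j') then show ?thesis using \<open>i = 0\<close> p j by simp
    qed
  next
    case (Suc i')
    then show ?thesis
    proof (cases j)
      case 0
      have "ip I (u i') v = cnj (ip I v (u i'))" by (simp add: ip_cnj)
      then show ?thesis using Suc 0 p i by simp
    next
      case (Suc j') then show ?thesis using \<open>i = Suc i'\<close> o i j unfolding orthonormal_def by simp
    qed
  qed
qed

lemma app_deflate:
  "app I (\<lambda>x y. A x y - c * v x * cnj (v y)) w x = app I A w x - c * v x * ip I v w"
  unfolding app_def ip_def by (simp add: left_diff_distrib sum_subtractf sum_distrib_left mult.assoc)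

lemma herm_deflate:
  assumes "herm I A"
  shows "herm I (\<lambda>x y. A x y - complex_of_real c * v x * cnj (v y))"
  unfolding herm_def
proof (intro ballI)
  fix x y assume "x \<in> I" "y \<in> I"
  then have "A y x = cnj (A x y)" using assms unfolding herm_def by blast
  then show "A y x - complex_of_real c * v y * cnj (v x) = cnj (A x y - complex_of_real c * v x * cnj (v y))"
    by (simp add: mult.commute mult.left_commute)
qed

lemma spectral_aux:
  assumes fin: "finite I"
  shows "\<forall>A. herm I A \<longrightarrow>
    (\<exists>m lam u. orthonormal I m u \<and> decomp I m lam u A \<and> (\<forall>j<m. lam j \<noteq> 0)) \<or>
    (\<exists>u lam. orthonormal I k u \<and> (\<forall>j<k. lam j \<noteq> 0 \<and> (\<forall>x\<in>I. app I A (u j) x = complex_of_real (lam j) * u j x)))"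
proof (induction k)
  case 0
  show ?case unfolding orthonormal_def by auto
next
  case (Suc k)
  show ?case
  proof (intro allI impI)
    fix A assume h: "herm I A"
    show "(\<exists>m lam u. orthonormal I m u \<and> decomp I m lam u A \<and> (\<forall>j<m. lam j \<noteq> 0)) \<or>
      (\<exists>u lam. orthonormal I (Suc k) u \<and> (\<forall>j<Suc k. lam j \<noteq> 0 \<and> (\<forall>x\<in>I. app I A (u j) x = complex_of_real (lam j) * u j x)))"
    proof (cases "\<forall>x\<in>I. \<forall>y\<in>I. A x y = 0")
      case True
      have "orthonormal I 0 (\<lambda>_ _. 0)" unfolding orthonormal_def by simp
      moreover have "decomp I 0 (\<lambda>_. 0) (\<lambda>_ _. 0) A" unfolding decomp_def using True by simp
      ultimately show ?thesis by blast
    next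
      case False
      then obtain x0 y0 where x0: "x0 \<in> I" and y0: "y0 \<in> I" and nz: "A x0 y0 \<noteq> 0" by blast
      obtain v \<mu> where v: "nrm2 I v = 1" and mu: "\<mu> \<noteq> 0"
        and ev: "\<forall>x\<in>I. app I A v x = complex_of_real \<mu> * v x"
        using eigen_nonzero[OF fin h x0 y0 nz] by blast
      define A' where "A' = (\<lambda>x y. A x y - complex_of_real \<mu> * v x * cnj (v y))"
      have h': "herm I A'" unfolding A'_def by (rule herm_deflate[OF h])
      have ipvv: "ip I v v = 1" using ip_self[of I v] v by simp
      have A'v: "\<forall>x\<in>I. app I A' v x = 0"
        unfolding A'_def app_deflate using ev ipvv by simp
      have orth: "\<And>w l. l \<noteq> 0 \<Longrightarrow> (\<forall>x\<in>I. app I A' w x = complex_of_real l * w x) \<Longrightarrow> ip I v w = 0"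
      proof -
        fix w l assume l: "(l::real) \<noteq> 0" and ew: "\<forall>x\<in>I. app I A' w x = complex_of_real l * w x"
        have "ip I v (app I A' w) = ip I (app I A' v) w" by (rule herm_ip[OF h'])
        also have "\<dots> = ip I (\<lambda>_. 0) w" using A'v by (intro ip_cong1) auto
        also have "\<dots> = 0" unfolding ip_def by simp
        finally have a: "ip I v (app I A' w) = 0" .
        have "ip I v (app I A' w) = ip I v (\<lambda>x. complex_of_real l * w x)" using ew by (intro ip_cong2) auto
        also have "\<dots> = complex_of_real l * ip I v w" by (rule ip_scale2)
        finally show "ip I v w = 0" using a l by simp
      qed
      have appA: "\<And>w x. app I A w x = app I A' w x + complex_of_real \<mu> * v x * ip I v w"
        unfolding A'_def app_deflate by simp
      have IH: "(\<exists>m lam u. orthonormal I m u \<and> decomp I m lam u A' \<and> (\<forall>j<m. lam j \<noteq> 0)) \<or>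
    (\<exists>u lam. orthonormal I k u \<and> (\<forall>j<k. lam j \<noteq> 0 \<and> (\<forall>x\<in>I. app I A' (u j) x = complex_of_real (lam j) * u j x)))"
        using Suc.IH h' by blast
      from IH show ?thesis
      proof (elim disjE exE conjE)
        fix m lam u
        assume o: "orthonormal I m u" and d: "decomp I m lam u A'" and nz: "\<forall>j<m. lam j \<noteq> 0"
        have p: "\<forall>j<m. ip I v (u j) = 0"
          using orth nz decomp_eigen[OF fin o d] by blast
        have "orthonormal I (Suc m) (case_nat v u)" by (rule orthonormal_cons[OF o v p])
        moreover have "decomp I (Suc m) (case_nat \<mu> lam) (case_nat v u) A"
          unfolding decomp_def
        proof (intro ballI)
          fix x y assume x: "x \<in> I" and y: "y \<in> I"
          have "A x y = A' x y + complex_of_real \<mu> * v x * cnj (v y)" unfolding A'_def by simp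
          also have "\<dots> = (\<Sum>j<m. complex_of_real (lam j) * u j x * cnj (u j y)) + complex_of_real \<mu> * v x * cnj (v y)"
            using d x y unfolding decomp_def by simp
          also have "\<dots> = (\<Sum>j<Suc m. complex_of_real (case_nat \<mu> lam j) * case_nat v u j x * cnj (case_nat v u j y))"
            by (subst sum.lessThan_Suc_shift) (simp add: add.commute)
          finally show "A x y = (\<Sum>j<Suc m. complex_of_real (case_nat \<mu> lam j) * case_nat v u j x * cnj (case_nat v u j y))" .
        qed
        moreover have "\<forall>j<Suc m. case_nat \<mu> lam j \<noteq> 0" using mu nz by (auto split: nat.split)
        ultimately show ?thesis by blast
      next
        fix u lam
        assume o: "orthonormal I k u"
          and e: "\<forall>j<k. lam j \<noteq> 0 \<and> (\<forall>x\<in>I. app I A' (u j) x = complex_of_real (lam j) * u j x)"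
        have p: "\<forall>j<k. ip I v (u j) = 0" using orth e by blast
        have "orthonormal I (Suc k) (case_nat v u)" by (rule orthonormal_cons[OF o v p])
        moreover have "\<forall>j<Suc k. case_nat \<mu> lam j \<noteq> 0 \<and>
           (\<forall>x\<in>I. app I A (case_nat v u j) x = complex_of_real (case_nat \<mu> lam j) * case_nat v u j x)"
        proof (intro allI impI)
          fix j assume j: "j < Suc k"
          show "case_nat \<mu> lam j \<noteq> 0 \<and>
           (\<forall>x\<in>I. app I A (case_nat v u j) x = complex_of_real (case_nat \<mu> lam j) * case_nat v u j x)"
          proof (cases j)
            case 0 then show ?thesis using mu ev by simp
          next
            case (Suc j')
            then have j': "j' < k" using j by simp
            show ?thesis using Suc e j' p appA by simp
          qed
        qed
        ultimately show ?thesis by blast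
      qed
    qed
  qed
qed

theorem spectral:
  assumes fin: "finite I" and h: "herm I A"
  shows "\<exists>m lam u. orthonormal I m u \<and> decomp I m lam u A \<and> (\<forall>j<m. lam j \<noteq> 0)"
proof -
  have "(\<exists>m lam u. orthonormal I m u \<and> decomp I m lam u A \<and> (\<forall>j<m. lam j \<noteq> 0)) \<or>
    (\<exists>u lam. orthonormal I (Suc (card I)) u \<and> (\<forall>j<Suc (card I). lam j \<noteq> 0 \<and> (\<forall>x\<in>I. app I A (u j) x = complex_of_real (lam j) * u j x)))"
    using spectral_aux[OF fin, of "Suc (card I)"] h by blast
  then show ?thesis using orthonormal_card[OF fin] by fastforce
qed


definition dec :: "'b set \<Rightarrow> ('b \<Rightarrow> complex) \<Rightarrow> ('b \<Rightarrow> 'a \<Rightarrow> complex) \<Rightarrow> 'a \<Rightarrow> 'a \<Rightarrow> complex" where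
  "dec J a w = (\<lambda>x y. \<Sum>j\<in>J. a j * w j x * cnj (w j y))"

definition mm :: "'a set \<Rightarrow> ('a \<Rightarrow> 'a \<Rightarrow> complex) \<Rightarrow> ('a \<Rightarrow> 'a \<Rightarrow> complex) \<Rightarrow> ('a \<Rightarrow> 'a \<Rightarrow> complex)" where
  "mm I A B = (\<lambda>x y. if x \<in> I \<and> y \<in> I then (\<Sum>z\<in>I. A x z * B z y) else 0)"

definition supp :: "'a set \<Rightarrow> ('a \<Rightarrow> 'a \<Rightarrow> complex) \<Rightarrow> bool" where
  "supp I P \<longleftrightarrow> (\<forall>x y. x \<notin> I \<or> y \<notin> I \<longrightarrow> P x y = 0)"

definition psdI :: "'a set \<Rightarrow> ('a \<Rightarrow> 'a \<Rightarrow> complex) \<Rightarrow> bool" where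
  "psdI I P \<longleftrightarrow> herm I P \<and> (\<forall>v. 0 \<le> qf I P v)"

lemma qf_sum: "qf I P v = Re (\<Sum>x\<in>I. \<Sum>y\<in>I. cnj (v x) * P x y * v y)"
  unfolding qf_def ip_def app_def by (simp add: sum_distrib_left mult.assoc)

lemma tr_dec:
  "(\<Sum>x\<in>I. \<Sum>y\<in>I. dec J a w x y * G y x) = (\<Sum>j\<in>J. a j * ip I (w j) (app I G (w j)))"
proof -
  have "(\<Sum>x\<in>I. \<Sum>y\<in>I. dec J a w x y * G y x) = (\<Sum>x\<in>I. \<Sum>y\<in>I. \<Sum>j\<in>J. a j * w j x * cnj (w j y) * G y x)"
    unfolding dec_def by (simp add: sum_distrib_right)
  also have "\<dots> = (\<Sum>x\<in>I. \<Sum>j\<in>J. \<Sum>y\<in>I. a j * w j x * cnj (w j y) * G y x)"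
    by (rule sum.cong[OF refl], rule sum.swap)
  also have "\<dots> = (\<Sum>j\<in>J. \<Sum>x\<in>I. \<Sum>y\<in>I. a j * w j x * cnj (w j y) * G y x)"
    by (rule sum.swap)
  also have "\<dots> = (\<Sum>j\<in>J. a j * ip I (w j) (app I G (w j)))"
  proof (rule sum.cong[OF refl])
    fix j
    have "(\<Sum>x\<in>I. \<Sum>y\<in>I. a j * w j x * cnj (w j y) * G y x) = (\<Sum>y\<in>I. \<Sum>x\<in>I. a j * w j x * cnj (w j y) * G y x)"
      by (rule sum.swap)
    also have "\<dots> = a j * ip I (w j) (app I G (w j))"
      unfolding ip_def app_def by (simp add: sum_distrib_left ac_simps)
    finally show "(\<Sum>x\<in>I. \<Sum>y\<in>I. a j * w j x * cnj (w j y) * G y x) = a j * ip I (w j) (app I G (w j))" .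
  qed
  finally show ?thesis .
qed

lemma mm_dec:
  assumes o: "orthonormal I m u"
  shows "(\<Sum>z\<in>I. dec {..<m} a u x z * dec {..<m} b u z y) = dec {..<m} (\<lambda>j. a j * b j) u x y"
proof -
  have "(\<Sum>z\<in>I. dec {..<m} a u x z * dec {..<m} b u z y) =
     (\<Sum>z\<in>I. \<Sum>i<m. \<Sum>j<m. a i * u i x * (b j * cnj (u j y)) * (cnj (u i z) * u j z))"
    unfolding dec_def sum_product by (simp add: ac_simps)
  also have "\<dots> = (\<Sum>i<m. \<Sum>j<m. a i * u i x * (b j * cnj (u j y)) * ip I (u i) (u j))"
    unfolding ip_def sum_distrib_left
    by (rule trans[OF sum.swap], rule sum.cong[OF refl], rule sum.swap)
  also have "\<dots> = (\<Sum>i<m. \<Sum>j<m. if i = j then a i * u i x * (b j * cnj (u j y)) else 0)"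
    using o unfolding orthonormal_def by (intro sum.cong refl) auto
  also have "\<dots> = dec {..<m} (\<lambda>j. a j * b j) u x y" unfolding dec_def
    by (simp add: mult.assoc mult.left_commute)
  finally show ?thesis .
qed

lemma psd_unique:
  assumes fin: "finite I" and sP: "supp I P" and sR: "supp I R" and pP: "psdI I P" and pR: "psdI I R"
    and eq: "mm I P P = mm I R R"
  shows "P = R"
proof -
  have hP: "herm I P" and hR: "herm I R" using pP pR unfolding psdI_def by auto
  define D where "D = (\<lambda>x y. P x y - R x y)"
  have hD: "herm I D" unfolding herm_def D_def
  proof (intro ballI)
    fix x y assume "x \<in> I" "y \<in> I"
    then have "P y x = cnj (P x y)" "R y x = cnj (R x y)" using hP hR unfolding herm_def by blast+
    then show "P y x - R y x = cnj (P x y - R x y)" by simp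
  qed
  obtain m mu w where o: "orthonormal I m w" and d: "decomp I m mu w D" and nz: "\<forall>j<m. mu j \<noteq> 0"
    using spectral[OF fin hD] by blast
  show ?thesis
  proof (cases "m = 0")
    case True
    show ?thesis
    proof (rule ext, rule ext)
      fix x y
      show "P x y = R x y"
      proof (cases "x \<in> I \<and> y \<in> I")
        case True
        then have "D x y = 0" using d \<open>m = 0\<close> unfolding decomp_def by simp
        then show ?thesis unfolding D_def by simp
      next
        case False then show ?thesis using sP sR unfolding supp_def by auto
      qed
    qed
  next
    case False
    then have m0: "0 < m" by simp
    let ?w = "w 0" and ?\<mu> = "mu 0"
    have evD: "\<forall>x\<in>I. app I D ?w x = complex_of_real ?\<mu> * ?w x"
      using decomp_eigen[OF fin o d m0] by blast
    have ww: "ip I ?w ?w = 1" using o m0 unfolding orthonormal_def by simp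
    have appD: "\<And>v x. app I D v x = app I P v x - app I R v x"
      unfolding app_def D_def by (simp add: left_diff_distrib sum_subtractf)
    have sq: "\<And>Q v. herm I Q \<Longrightarrow> ip I (app I Q v) (app I Q v) = ip I v (app I (mm I Q Q) v)"
    proof -
      fix Q v assume hQ: "herm I Q"
      have "ip I (app I Q v) (app I Q v) = ip I v (app I Q (app I Q v))" by (rule herm_ip[OF hQ, symmetric])
      also have "\<dots> = ip I v (app I (mm I Q Q) v)"
      proof (rule ip_cong2)
        fix x assume x: "x \<in> I"
        have "app I Q (app I Q v) x = (\<Sum>y\<in>I. \<Sum>z\<in>I. Q x y * Q y z * v z)"
          unfolding app_def by (simp add: sum_distrib_left mult.assoc)
        also have "\<dots> = (\<Sum>z\<in>I. \<Sum>y\<in>I. Q x y * Q y z * v z)" by (rule sum.swap)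
        also have "\<dots> = app I (mm I Q Q) v x"
          unfolding app_def mm_def using x by (intro sum.cong refl) (simp add: sum_distrib_right)
        finally show "app I Q (app I Q v) x = app I (mm I Q Q) v x" .
      qed
      finally show "ip I (app I Q v) (app I Q v) = ip I v (app I (mm I Q Q) v)" .
    qed
    have same: "ip I (app I P ?w) (app I P ?w) = ip I (app I R ?w) (app I R ?w)"
      using sq[OF hP] sq[OF hR] eq by simp
    have expd: "\<And>a c. (\<forall>x\<in>I. a x = app I R ?w x + complex_of_real c * ?w x) \<Longrightarrow>
       ip I a a = ip I (app I R ?w) (app I R ?w) + complex_of_real (2 * c * qf I R ?w + c^2)"
    proof -
      fix a c assume ha: "\<forall>x\<in>I. a x = app I R ?w x + complex_of_real c * ?w x"
      have "ip I a a = ip I (\<lambda>x. app I R ?w x + complex_of_real c * ?w x) (\<lambda>x. app I R ?w x + complex_of_real c * ?w x)"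
        using ha by (simp add: ip_def)
      also have "\<dots> = ip I (app I R ?w) (app I R ?w) + complex_of_real c * ip I (app I R ?w) ?w
          + complex_of_real c * ip I ?w (app I R ?w) + complex_of_real c * complex_of_real c * ip I ?w ?w"
        by (simp add: ip_add1 ip_add2 ip_scale1 ip_scale2 algebra_simps)
      also have "ip I (app I R ?w) ?w = complex_of_real (qf I R ?w)"
        using herm_ip[OF hR, of ?w ?w] herm_ip_real[OF hR, of ?w] by simp
      also have "ip I ?w (app I R ?w) = complex_of_real (qf I R ?w)"
        using herm_ip_real[OF hR, of ?w] by simp
      finally show "ip I a a = ip I (app I R ?w) (app I R ?w) + complex_of_real (2 * c * qf I R ?w + c^2)"
        using ww by (simp add: power2_eq_square algebra_simps)
    qed
    have "\<forall>x\<in>I. app I P ?w x = app I R ?w x + complex_of_real ?\<mu> * ?w x"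
    proof
      fix x assume x: "x \<in> I"
      have h: "app I P ?w x - app I R ?w x = complex_of_real ?\<mu> * ?w x" using evD x appD by metis
      have "app I P ?w x = app I R ?w x + (app I P ?w x - app I R ?w x)" by simp
      also have "\<dots> = app I R ?w x + complex_of_real ?\<mu> * ?w x" unfolding h by simp
      finally show "app I P ?w x = app I R ?w x + complex_of_real ?\<mu> * ?w x" .
    qed
    then have "ip I (app I P ?w) (app I P ?w) = ip I (app I R ?w) (app I R ?w) + complex_of_real (2 * ?\<mu> * qf I R ?w + ?\<mu>^2)"
      by (rule expd)
    then have "complex_of_real (2 * ?\<mu> * qf I R ?w + ?\<mu>^2) = 0" using same by (metis add_cancel_right_right)
    then have r1: "2 * ?\<mu> * qf I R ?w + ?\<mu>^2 = 0" by (simp only: of_real_eq_0_iff)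
    have expd2: "\<And>a c. (\<forall>x\<in>I. a x = app I P ?w x + complex_of_real c * ?w x) \<Longrightarrow>
       ip I a a = ip I (app I P ?w) (app I P ?w) + complex_of_real (2 * c * qf I P ?w + c^2)"
    proof -
      fix a c assume ha: "\<forall>x\<in>I. a x = app I P ?w x + complex_of_real c * ?w x"
      have "ip I a a = ip I (\<lambda>x. app I P ?w x + complex_of_real c * ?w x) (\<lambda>x. app I P ?w x + complex_of_real c * ?w x)"
        using ha by (simp add: ip_def)
      also have "\<dots> = ip I (app I P ?w) (app I P ?w) + complex_of_real c * ip I (app I P ?w) ?w
          + complex_of_real c * ip I ?w (app I P ?w) + complex_of_real c * complex_of_real c * ip I ?w ?w"
        by (simp add: ip_add1 ip_add2 ip_scale1 ip_scale2 algebra_simps)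
      also have "ip I (app I P ?w) ?w = complex_of_real (qf I P ?w)"
        using herm_ip[OF hP, of ?w ?w] herm_ip_real[OF hP, of ?w] by simp
      also have "ip I ?w (app I P ?w) = complex_of_real (qf I P ?w)"
        using herm_ip_real[OF hP, of ?w] by simp
      finally show "ip I a a = ip I (app I P ?w) (app I P ?w) + complex_of_real (2 * c * qf I P ?w + c^2)"
        using ww by (simp add: power2_eq_square algebra_simps)
    qed
    have "\<forall>x\<in>I. app I R ?w x = app I P ?w x + complex_of_real (- ?\<mu>) * ?w x"
    proof
      fix x assume x: "x \<in> I"
      have h: "app I P ?w x - app I R ?w x = complex_of_real ?\<mu> * ?w x" using evD x appD by metis
      have "app I R ?w x = app I P ?w x - (app I P ?w x - app I R ?w x)" by simp
      also have "\<dots> = app I P ?w x + complex_of_real (- ?\<mu>) * ?w x" unfolding h by simp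
      finally show "app I R ?w x = app I P ?w x + complex_of_real (- ?\<mu>) * ?w x" .
    qed
    then have "ip I (app I R ?w) (app I R ?w) = ip I (app I P ?w) (app I P ?w) + complex_of_real (2 * (- ?\<mu>) * qf I P ?w + (- ?\<mu>)^2)"
      by (rule expd2)
    then have "complex_of_real (2 * (- ?\<mu>) * qf I P ?w + (- ?\<mu>)^2) = 0" using same by (metis add_cancel_right_right)
    then have r2: "2 * (- ?\<mu>) * qf I P ?w + (- ?\<mu>)^2 = 0" by (simp only: of_real_eq_0_iff)
    have "0 \<le> qf I P ?w" "0 \<le> qf I R ?w" using pP pR unfolding psdI_def by auto
    moreover have "?\<mu> \<noteq> 0" using nz m0 by blast
    ultimately have False using r1 r2
      by (smt (verit) mult_nonneg_nonneg mult_nonpos_nonneg power2_eq_square zero_less_power2)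
    then show ?thesis ..
  qed
qed


lemma decomp_dec: "decomp I m lam u T \<longleftrightarrow> (\<forall>x\<in>I. \<forall>y\<in>I. T x y = dec {..<m} (\<lambda>j. complex_of_real (lam j)) u x y)"
  unfolding decomp_def dec_def by simp

lemma sum_prod_aux: "(\<Sum>x\<in>I. \<Sum>y\<in>I. (c::complex) * f x * g y) = c * (sum f I * sum g I)"
proof -
  have e: "sum f I * sum g I = (\<Sum>x\<in>I. \<Sum>y\<in>I. f x * g y)" by (rule sum_product)
  show ?thesis unfolding e by (simp add: sum_distrib_left mult.assoc)
qed

lemma qf_dec:
  "ip I v (app I (dec J a w) v) = (\<Sum>j\<in>J. a j * (ip I v (w j) * ip I (w j) v))"
proof -
  have "ip I v (app I (dec J a w) v) = (\<Sum>x\<in>I. \<Sum>y\<in>I. \<Sum>j\<in>J. a j * (cnj (v x) * w j x) * (cnj (w j y) * v y))"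
    unfolding ip_def app_def dec_def by (simp add: sum_distrib_left sum_distrib_right ac_simps)
  also have "\<dots> = (\<Sum>x\<in>I. \<Sum>j\<in>J. \<Sum>y\<in>I. a j * (cnj (v x) * w j x) * (cnj (w j y) * v y))"
    by (rule sum.cong[OF refl], rule sum.swap)
  also have "\<dots> = (\<Sum>j\<in>J. \<Sum>x\<in>I. \<Sum>y\<in>I. a j * (cnj (v x) * w j x) * (cnj (w j y) * v y))"
    by (rule sum.swap)
  also have "\<dots> = (\<Sum>j\<in>J. a j * (ip I v (w j) * ip I (w j) v))"
    unfolding ip_def by (rule sum.cong[OF refl]) (rule sum_prod_aux)
  finally show ?thesis .
qed

lemma trace_dec:
  assumes o: "orthonormal I m u"
  shows "(\<Sum>x\<in>I. dec {..<m} a u x x) = (\<Sum>j<m. a j)"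
proof -
  have "(\<Sum>x\<in>I. dec {..<m} a u x x) = (\<Sum>j<m. a j * ip I (u j) (u j))"
    unfolding dec_def ip_def by (simp add: sum_distrib_left ac_simps) (rule sum.swap)
  also have "\<dots> = (\<Sum>j<m. a j)" using o unfolding orthonormal_def by simp
  finally show ?thesis .
qed

definition absd :: "'a set \<Rightarrow> nat \<Rightarrow> (nat \<Rightarrow> real) \<Rightarrow> (nat \<Rightarrow> 'a \<Rightarrow> complex) \<Rightarrow> 'a \<Rightarrow> 'a \<Rightarrow> complex" where
  "absd I m lam u = (\<lambda>x y. if x \<in> I \<and> y \<in> I then dec {..<m} (\<lambda>j. complex_of_real \<bar>lam j\<bar>) u x y else 0)"

lemma abs_char:
  assumes fin: "finite I" and h: "herm I T" and o: "orthonormal I m u" and d: "decomp I m lam u T"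
  shows "supp I (absd I m lam u)" "psdI I (absd I m lam u)"
    "mm I (absd I m lam u) (absd I m lam u) = mm I (\<lambda>x y. cnj (T y x)) T"
    "Re (\<Sum>x\<in>I. absd I m lam u x x) = (\<Sum>j<m. \<bar>lam j\<bar>)"
proof -
  let ?P = "absd I m lam u"
  let ?a = "\<lambda>j. complex_of_real \<bar>lam j\<bar>"
  show "supp I ?P" unfolding supp_def absd_def by auto
  have hP: "herm I ?P" unfolding herm_def absd_def dec_def by (simp add: ac_simps)
  have appP: "\<And>v. ip I v (app I ?P v) = ip I v (app I (dec {..<m} ?a u) v)"
    by (rule ip_cong2) (simp add: app_def absd_def)
  have "\<And>v. 0 \<le> qf I ?P v"
  proof -
    fix v
    have "ip I v (app I ?P v) = (\<Sum>j<m. ?a j * (ip I v (u j) * ip I (u j) v))"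
      unfolding appP qf_dec ..
    also have "\<dots> = complex_of_real (\<Sum>j<m. \<bar>lam j\<bar> * (cmod (ip I (u j) v))^2)"
    proof -
      have "\<And>j. ip I v (u j) * ip I (u j) v = complex_of_real ((cmod (ip I (u j) v))^2)"
        by (metis complex_norm_square ip_cnj mult.commute)
      then show ?thesis by simp
    qed
    finally show "0 \<le> qf I ?P v" unfolding qf_def by (simp add: sum_nonneg)
  qed
  then show "psdI I ?P" unfolding psdI_def using hP by blast
  show "mm I ?P ?P = mm I (\<lambda>x y. cnj (T y x)) T"
  proof (intro ext)
    fix x y
    show "mm I ?P ?P x y = mm I (\<lambda>x y. cnj (T y x)) T x y"
    proof (cases "x \<in> I \<and> y \<in> I")
      case False then show ?thesis unfolding mm_def by (simp only: if_False)
    next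
      case True
      have xI: "x \<in> I" and yI: "y \<in> I" using True by auto
      have "mm I ?P ?P x y = (\<Sum>z\<in>I. ?P x z * ?P z y)" unfolding mm_def using True by simp
      also have "\<dots> = (\<Sum>z\<in>I. dec {..<m} ?a u x z * dec {..<m} ?a u z y)"
        by (rule sum.cong[OF refl]) (simp add: absd_def xI yI)
      also have "\<dots> = dec {..<m} (\<lambda>j. ?a j * ?a j) u x y" by (rule mm_dec[OF o])
      also have "\<dots> = dec {..<m} (\<lambda>j. complex_of_real (lam j) * complex_of_real (lam j)) u x y"
        unfolding dec_def by (intro sum.cong refl) (simp flip: of_real_mult)
      also have "\<dots> = (\<Sum>z\<in>I. dec {..<m} (\<lambda>j. complex_of_real (lam j)) u x z * dec {..<m} (\<lambda>j. complex_of_real (lam j)) u z y)"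
        by (rule mm_dec[OF o, symmetric])
      also have "\<dots> = mm I (\<lambda>x y. cnj (T y x)) T x y"
        unfolding mm_def using True
      proof (simp, intro sum.cong refl)
        fix z assume z: "z \<in> I"
        have "T z x = cnj (T x z)" using h z True unfolding herm_def by blast
        then have "cnj (T z x) = T x z" by simp
        then show "dec {..<m} (\<lambda>j. complex_of_real (lam j)) u x z * dec {..<m} (\<lambda>j. complex_of_real (lam j)) u z y = cnj (T z x) * T z y"
          using d z True unfolding decomp_dec by simp
      qed
      finally show ?thesis .
    qed
  qed
  have "(\<Sum>x\<in>I. ?P x x) = (\<Sum>x\<in>I. dec {..<m} ?a u x x)" unfolding absd_def by simp
  also have "\<dots> = (\<Sum>j<m. ?a j)" by (rule trace_dec[OF o])
  finally show "Re (\<Sum>x\<in>I. ?P x x) = (\<Sum>j<m. \<bar>lam j\<bar>)" by simp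
qed

lemma abs_the:
  assumes fin: "finite I" and h: "herm I T" and o: "orthonormal I m u" and d: "decomp I m lam u T"
  shows "(THE P. supp I P \<and> psdI I P \<and> mm I P P = mm I (\<lambda>x y. cnj (T y x)) T) = absd I m lam u"
proof (rule the_equality)
  show "supp I (absd I m lam u) \<and> psdI I (absd I m lam u) \<and> mm I (absd I m lam u) (absd I m lam u) = mm I (\<lambda>x y. cnj (T y x)) T"
    using abs_char[OF assms] by blast
  fix P assume "supp I P \<and> psdI I P \<and> mm I P P = mm I (\<lambda>x y. cnj (T y x)) T"
  then show "P = absd I m lam u"
    using psd_unique[OF fin, of P "absd I m lam u"] abs_char[OF assms] by simp
qed

definition opn :: "'a set \<Rightarrow> ('a \<Rightarrow> 'a \<Rightarrow> complex) \<Rightarrow> real" where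
  "opn I G = Sup {sqrt (nrm2 I (app I G v)) | v. nrm2 I v \<le> 1}"

lemma unit_bound2: assumes "finite I" "nrm2 I v \<le> 1" "x \<in> I" shows "cmod (v x) \<le> 1"
proof -
  have "(cmod (v x))^2 \<le> nrm2 I v" unfolding nrm2_def
    using assms by (intro member_le_sum) auto
  then have "(cmod (v x))^2 \<le> 1^2" using assms by simp
  then show ?thesis by (rule power2_le_imp_le) simp
qed

lemma opn_bdd: assumes fin: "finite I" shows "bdd_above {sqrt (nrm2 I (app I G v)) | v. nrm2 I v \<le> 1}"
proof -
  define B where "B = (\<Sum>x\<in>I. (\<Sum>y\<in>I. cmod (G x y))^2)"
  have "\<And>v. nrm2 I v \<le> 1 \<Longrightarrow> sqrt (nrm2 I (app I G v)) \<le> sqrt B"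
  proof -
    fix v assume v: "nrm2 I v \<le> 1"
    have "nrm2 I (app I G v) \<le> B" unfolding nrm2_def B_def
    proof (rule sum_mono)
      fix x assume x: "x \<in> I"
      have "cmod (app I G v x) \<le> (\<Sum>y\<in>I. cmod (G x y * v y))" unfolding app_def by (rule norm_sum)
      also have "\<dots> \<le> (\<Sum>y\<in>I. cmod (G x y))"
      proof (rule sum_mono)
        fix y assume y: "y \<in> I"
        have "cmod (G x y * v y) = cmod (G x y) * cmod (v y)" by (simp add: norm_mult)
        also have "\<dots> \<le> cmod (G x y) * 1" using unit_bound2[OF fin v y] by (intro mult_left_mono) auto
        finally show "cmod (G x y * v y) \<le> cmod (G x y)" by simp
      qed
      finally show "(cmod (app I G v x))^2 \<le> (\<Sum>y\<in>I. cmod (G x y))^2"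
        by (intro power_mono) auto
    qed
    then show "sqrt (nrm2 I (app I G v)) \<le> sqrt B" by simp
  qed
  then show ?thesis unfolding bdd_above_def by blast
qed

lemma opn_ge: assumes fin: "finite I" and v: "nrm2 I v \<le> 1"
  shows "sqrt (nrm2 I (app I G v)) \<le> opn I G"
  unfolding opn_def using v by (intro cSup_upper opn_bdd[OF fin]) blast

lemma opn_nonneg: assumes fin: "finite I" shows "0 \<le> opn I G"
proof -
  have "nrm2 I (\<lambda>_. 0) \<le> 1" unfolding nrm2_def by simp
  from opn_ge[OF fin this, of G] show ?thesis by (meson order_trans real_sqrt_ge_zero nrm2_nonneg)
qed

lemma cauchy_schwarz: "cmod (ip I a b) \<le> sqrt (nrm2 I a) * sqrt (nrm2 I b)"
proof -
  have "cmod (ip I a b) \<le> (\<Sum>x\<in>I. cmod (cnj (a x) * b x))" unfolding ip_def by (rule norm_sum)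
  also have "\<dots> = (\<Sum>x\<in>I. \<bar>cmod (a x)\<bar> * \<bar>cmod (b x)\<bar>)" by (simp add: norm_mult)
  also have "\<dots> \<le> L2_set (\<lambda>x. cmod (a x)) I * L2_set (\<lambda>x. cmod (b x)) I" by (rule L2_set_mult_ineq)
  also have "\<dots> = sqrt (nrm2 I a) * sqrt (nrm2 I b)" unfolding L2_set_def nrm2_def by simp
  finally show ?thesis .
qed

lemma quad_bound: assumes fin: "finite I" and v: "nrm2 I v = 1"
  shows "cmod (ip I v (app I G v)) \<le> opn I G"
proof -
  have "cmod (ip I v (app I G v)) \<le> sqrt (nrm2 I v) * sqrt (nrm2 I (app I G v))" by (rule cauchy_schwarz)
  also have "\<dots> = sqrt (nrm2 I (app I G v))" using v by simp
  also have "\<dots> \<le> opn I G" using opn_ge[OF fin] v by simp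
  finally show ?thesis .
qed


definition rz :: "nat set \<Rightarrow> config \<Rightarrow> config" where
  "rz A x = (\<lambda>i. if i \<in> A then x i else 0)"

lemma Conf_iff: "x \<in> Conf S d \<longleftrightarrow> (\<forall>i\<in>S. x i < d) \<and> (\<forall>i. i \<notin> S \<longrightarrow> x i = 0)"
  unfolding Conf_def by simp

lemma finite_Conf: assumes "finite S" shows "finite (Conf S d)"
proof -
  have "Conf S d \<subseteq> (\<lambda>f i. if i \<in> S then f i else 0) ` (PiE S (\<lambda>_. {..<d}))"
  proof
    fix x assume x: "x \<in> Conf S d"
    have "restrict x S \<in> PiE S (\<lambda>_. {..<d})" using x unfolding Conf_def by auto
    moreover have "x = (\<lambda>i. if i \<in> S then restrict x S i else 0)" using x unfolding Conf_def by auto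
    ultimately show "x \<in> (\<lambda>f i. if i \<in> S then f i else 0) ` (PiE S (\<lambda>_. {..<d}))" by blast
  qed
  moreover have "finite (PiE S (\<lambda>_. {..<d}))" using assms by (intro finite_PiE) auto
  ultimately show ?thesis using finite_subset by blast
qed

lemma Conf_empty: "Conf {} d = {\<lambda>_. 0}"
  unfolding Conf_def by auto

lemma merge_in:
  assumes "A \<inter> B = {}" "z \<in> Conf A d" "p \<in> Conf B d"
  shows "merge A z p \<in> Conf (A \<union> B) d"
  using assms unfolding Conf_def merge_def by auto

lemma rz_in: assumes "x \<in> Conf S d" shows "rz A x \<in> Conf (A \<inter> S) d"
  using assms unfolding Conf_def rz_def by auto

lemma merge_rz: assumes "x \<in> Conf (A \<union> B) d" shows "merge A (rz A x) (rz B x) = x"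
  using assms unfolding Conf_def rz_def merge_def by auto

lemma rz_merge1: assumes "z \<in> Conf A d" shows "rz A (merge A z p) = z"
  using assms unfolding Conf_def rz_def merge_def by auto

lemma rz_merge2: assumes "A \<inter> B = {}" "p \<in> Conf B d" shows "rz B (merge A z p) = p"
  using assms unfolding Conf_def rz_def merge_def by (auto intro!: ext)

lemma merge_merge: "merge A z (merge A w p) = merge A z p"
  unfolding merge_def by auto

lemma sum_split:
  assumes disj: "A \<inter> B = {}"
  shows "(\<Sum>x\<in>Conf (A \<union> B) d. f x) = (\<Sum>z\<in>Conf A d. \<Sum>p\<in>Conf B d. f (merge A z p))"
proof -
  have bij: "bij_betw (\<lambda>(z, p). merge A z p) (Conf A d \<times> Conf B d) (Conf (A \<union> B) d)"
  proof (rule bij_betw_byWitness[where f' = "\<lambda>x. (rz A x, rz B x)"])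
    show "\<forall>a\<in>Conf A d \<times> Conf B d. (\<lambda>x. (rz A x, rz B x)) (case a of (z, p) \<Rightarrow> merge A z p) = a"
      using rz_merge1 rz_merge2[OF disj] by auto
    show "\<forall>a'\<in>Conf (A \<union> B) d. (case (rz A a', rz B a') of (z, p) \<Rightarrow> merge A z p) = a'"
      using merge_rz by auto
    show "(\<lambda>(z, p). merge A z p) ` (Conf A d \<times> Conf B d) \<subseteq> Conf (A \<union> B) d"
      using merge_in[OF disj] by auto
    show "(\<lambda>x. (rz A x, rz B x)) ` Conf (A \<union> B) d \<subseteq> Conf A d \<times> Conf B d"
    proof
      fix y assume "y \<in> (\<lambda>x. (rz A x, rz B x)) ` Conf (A \<union> B) d"
      then obtain x where x: "x \<in> Conf (A \<union> B) d" and y: "y = (rz A x, rz B x)" by blast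
      have e: "A \<inter> (A \<union> B) = A" "B \<inter> (A \<union> B) = B" by blast+
      have "rz A x \<in> Conf A d" "rz B x \<in> Conf B d" using rz_in[OF x, of A] rz_in[OF x, of B] unfolding e by auto
      then show "y \<in> Conf A d \<times> Conf B d" using y by simp
    qed
  qed
  have "(\<Sum>x\<in>Conf (A \<union> B) d. f x) = (\<Sum>zp\<in>Conf A d \<times> Conf B d. f (case zp of (z, p) \<Rightarrow> merge A z p))"
    using sum.reindex_bij_betw[OF bij, of f] by simp
  also have "\<dots> = (\<Sum>(z, p)\<in>Conf A d \<times> Conf B d. f (merge A z p))"
    by (rule sum.cong) auto
  also have "\<dots> = (\<Sum>z\<in>Conf A d. \<Sum>p\<in>Conf B d. f (merge A z p))"
    by (rule sum.cartesian_product[symmetric])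
  finally show ?thesis .
qed

lemma sum_insert_site:
  assumes k: "k \<notin> T"
  shows "(\<Sum>w\<in>Conf (insert k T) d. f w) = (\<Sum>a<d. \<Sum>w\<in>Conf T d. f (w(k := a)))"
proof -
  have bij: "bij_betw (\<lambda>(a, w). w(k := a)) ({..<d} \<times> Conf T d) (Conf (insert k T) d)"
  proof (rule bij_betw_byWitness[where f' = "\<lambda>w. (w k, w(k := 0))"])
    show "\<forall>aw\<in>{..<d} \<times> Conf T d. (\<lambda>w. (w k, w(k := 0))) (case aw of (a, w) \<Rightarrow> w(k := a)) = aw"
      using k unfolding Conf_def by (auto intro!: ext)
    show "\<forall>w\<in>Conf (insert k T) d. (case (w k, w(k := 0)) of (a, w) \<Rightarrow> w(k := a)) = w"
      by auto
    show "(\<lambda>(a, w). w(k := a)) ` ({..<d} \<times> Conf T d) \<subseteq> Conf (insert k T) d"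
      unfolding Conf_def by auto
    show "(\<lambda>w. (w k, w(k := 0))) ` Conf (insert k T) d \<subseteq> {..<d} \<times> Conf T d"
      unfolding Conf_def by auto
  qed
  have "(\<Sum>w\<in>Conf (insert k T) d. f w) = (\<Sum>aw\<in>{..<d} \<times> Conf T d. f (case aw of (a, w) \<Rightarrow> w(k := a)))"
    using sum.reindex_bij_betw[OF bij, of f] by simp
  also have "\<dots> = (\<Sum>(a, w)\<in>{..<d} \<times> Conf T d. f (w(k := a)))"
    by (rule sum.cong) auto
  also have "\<dots> = (\<Sum>a<d. \<Sum>w\<in>Conf T d. f (w(k := a)))"
    by (rule sum.cartesian_product[symmetric])
  finally show ?thesis .
qed

lemma card_Conf: "card (Conf {0..<k} d) = d ^ k"
proof (induction k)
  case 0 then show ?case by (simp add: Conf_empty)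
next
  case (Suc k)
  have "card (Conf {0..<Suc k} d) = (\<Sum>w\<in>Conf (insert k {0..<k}) d. 1)"
    by (simp add: atLeast0_lessThan_Suc)
  also have "\<dots> = (\<Sum>a<d. \<Sum>w\<in>Conf {0..<k} d. (1::nat))"
    by (rule sum_insert_site) simp
  also have "\<dots> = d * d ^ k" using Suc by simp
  finally show ?case by simp
qed


lemma self_adj_herm: "self_adj S d A = herm (Conf S d) A"
  unfolding self_adj_def herm_def by simp

lemma op_norm_opn: "op_norm S d A = opn (Conf S d) A"
  unfolding op_norm_def opn_def nrm2_def app_def by simp

lemma abs_op_the: "abs_op S d A = (THE P. supp (Conf S d) P \<and> psdI (Conf S d) P \<and>
   mm (Conf S d) P P = mm (Conf S d) (\<lambda>x y. cnj (A y x)) A)"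
  unfolding abs_op_def supported_def supp_def psd_def psdI_def self_adj_herm qf_sum mmult_def mm_def adj_def
  by simp

lemma trace_norm_formula:
  assumes fin: "finite S" and h: "herm (Conf S d) T" and o: "orthonormal (Conf S d) m u"
    and dc: "decomp (Conf S d) m lam u T"
  shows "trace_norm S d T = (\<Sum>j<m. \<bar>lam j\<bar>)"
proof -
  have finC: "finite (Conf S d)" by (rule finite_Conf[OF fin])
  have "abs_op S d T = absd (Conf S d) m lam u"
    unfolding abs_op_the by (rule abs_the[OF finC h o dc])
  then show ?thesis unfolding trace_norm_def mtrace_def using abs_char(4)[OF finC h o dc] by simp
qed

definition tr2 :: "'a set \<Rightarrow> ('a \<Rightarrow> 'a \<Rightarrow> complex) \<Rightarrow> ('a \<Rightarrow> 'a \<Rightarrow> complex) \<Rightarrow> complex" where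
  "tr2 I A B = (\<Sum>x\<in>I. \<Sum>y\<in>I. A x y * B y x)"

lemma mtrace_mmult: "mtrace S d (mmult S d X H) = tr2 (Conf S d) X H"
  unfolding mtrace_def mmult_def tr2_def by simp

lemma tr2_diff: "tr2 I A (\<lambda>x y. B x y - C x y) = tr2 I A B - tr2 I A C"
  unfolding tr2_def by (simp add: right_diff_distrib sum_subtractf)

lemma ptrace_empty: "ptrace {} d X = X"
  unfolding ptrace_def Conf_empty merge_def by simp

lemma Conf_split_eq: assumes "k \<le> n" shows "{0..<k} \<union> ({0..<n} - {0..<k}) = {0..<(n::nat)}"
  using assms by auto

lemma herm_ptrace:
  assumes h: "herm (Conf S d) X" and AS: "A \<subseteq> S"
  shows "herm (Conf (S - A) d) (ptrace A d X)"
  unfolding herm_def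
proof (intro ballI)
  fix x y assume x: "x \<in> Conf (S - A) d" and y: "y \<in> Conf (S - A) d"
  have eq: "A \<union> (S - A) = S" using AS by auto
  have "\<And>z. z \<in> Conf A d \<Longrightarrow> X (merge A z y) (merge A z x) = cnj (X (merge A z x) (merge A z y))"
  proof -
    fix z assume z: "z \<in> Conf A d"
    have "merge A z x \<in> Conf S d" "merge A z y \<in> Conf S d"
      using merge_in[of A "S - A" z d x] merge_in[of A "S - A" z d y] x y z eq by auto
    then show "X (merge A z y) (merge A z x) = cnj (X (merge A z x) (merge A z y))"
      using h unfolding herm_def by blast
  qed
  then have "ptrace A d X y x = (\<Sum>z\<in>Conf A d. cnj (X (merge A z x) (merge A z y)))"
    unfolding ptrace_def by (rule sum.cong[OF refl])
  then show "ptrace A d X y x = cnj (ptrace A d X x y)"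
    unfolding ptrace_def by (simp only: cnj_sum)
qed


definition Tk :: "nat \<Rightarrow> nat \<Rightarrow> qop \<Rightarrow> qop" where
  "Tk d k X = ptrace {0..<k} d X"

definition Yk :: "nat \<Rightarrow> nat \<Rightarrow> qop \<Rightarrow> qop" where
  "Yk d k X = (\<lambda>x y. if (\<forall>i<k. x i = y i) then Tk d k X x y / (of_nat d ^ k) else 0)"

definition Fk :: "nat \<Rightarrow> nat \<Rightarrow> nat \<Rightarrow> qop \<Rightarrow> qop \<Rightarrow> complex" where
  "Fk n d k X H = (\<Sum>p1\<in>Conf ({0..<n} - {0..<k}) d. \<Sum>p2\<in>Conf ({0..<n} - {0..<k}) d.
      Tk d k X p1 p2 * (\<Sum>w\<in>Conf {0..<k} d. H (merge {0..<k} w p2) (merge {0..<k} w p1)))"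

lemma Tk_merge: "Tk d k X (merge {0..<k} z1 p1) (merge {0..<k} z2 p2) = Tk d k X p1 p2"
  unfolding Tk_def ptrace_def merge_merge ..

lemma Conf_eq_zero: assumes "z1 \<in> Conf A d" "z2 \<in> Conf A d" "\<forall>i\<in>A. z1 i = z2 i" shows "z1 = z2"
proof (rule ext)
  fix i show "z1 i = z2 i"
  proof (cases "i \<in> A")
    case True then show ?thesis using assms(3) by blast
  next
    case False then show ?thesis using assms(1,2) unfolding Conf_def by simp
  qed
qed

lemma Yk_merge:
  assumes z1: "z1 \<in> Conf {0..<k} d" and z2: "z2 \<in> Conf {0..<k} d"
  shows "Yk d k X (merge {0..<k} z1 p1) (merge {0..<k} z2 p2) =
    (if z1 = z2 then Tk d k X p1 p2 / (of_nat d ^ k) else 0)"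
proof -
  have "(\<forall>i<k. merge {0..<k} z1 p1 i = merge {0..<k} z2 p2 i) \<longleftrightarrow> z1 = z2"
  proof
    assume "\<forall>i<k. merge {0..<k} z1 p1 i = merge {0..<k} z2 p2 i"
    then have "\<forall>i\<in>{0..<k}. z1 i = z2 i" unfolding merge_def by auto
    then show "z1 = z2" using Conf_eq_zero[OF z1 z2] by blast
  next
    assume "z1 = z2" then show "\<forall>i<k. merge {0..<k} z1 p1 i = merge {0..<k} z2 p2 i"
      unfolding merge_def by auto
  qed
  then show ?thesis unfolding Yk_def Tk_merge by simp
qed

lemma sum_delta_inner:
  assumes "z1 \<in> C" "finite C"
  shows "(\<Sum>z2\<in>C. \<Sum>p2\<in>Q. (if z1 = z2 then f z2 p2 else 0)) = (\<Sum>p2\<in>Q. f z1 p2)"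
proof -
  have "(\<Sum>z2\<in>C. \<Sum>p2\<in>Q. (if z1 = z2 then f z2 p2 else 0)) = (\<Sum>z2\<in>C. if z1 = z2 then (\<Sum>p2\<in>Q. f z2 p2) else 0)"
    by (intro sum.cong) auto
  also have "\<dots> = (\<Sum>p2\<in>Q. f z1 p2)" using assms by simp
  finally show ?thesis .
qed

lemma LYF:
  assumes kn: "k \<le> n"
  shows "tr2 (Conf {0..<n} d) (Yk d k X) H = Fk n d k X H / (of_nat d ^ k)"
proof -
  let ?A = "{0..<k}" and ?B = "{0..<n} - {0..<k}"
  let ?C = "Conf ?A d" and ?Q = "Conf ?B d"
  let ?m = "merge ?A"
  have disj: "?A \<inter> ?B = {}" by auto
  have eq: "Conf {0..<n} d = Conf (?A \<union> ?B) d" using Conf_split_eq[OF kn] by simp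
  have finC: "finite ?C" by (rule finite_Conf) simp
  have "tr2 (Conf {0..<n} d) (Yk d k X) H = (\<Sum>x\<in>Conf (?A \<union> ?B) d. \<Sum>y\<in>Conf (?A \<union> ?B) d. Yk d k X x y * H y x)"
    unfolding tr2_def eq ..
  also have "\<dots> = (\<Sum>z1\<in>?C. \<Sum>p1\<in>?Q. \<Sum>z2\<in>?C. \<Sum>p2\<in>?Q. Yk d k X (?m z1 p1) (?m z2 p2) * H (?m z2 p2) (?m z1 p1))"
    unfolding sum_split[OF disj] ..
  also have "\<dots> = (\<Sum>z1\<in>?C. \<Sum>p1\<in>?Q. \<Sum>z2\<in>?C. \<Sum>p2\<in>?Q. (if z1 = z2 then Tk d k X p1 p2 / (of_nat d ^ k) * H (?m z2 p2) (?m z1 p1) else 0))"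
    by (intro sum.cong refl) (simp add: Yk_merge)
  also have "\<dots> = (\<Sum>z1\<in>?C. \<Sum>p1\<in>?Q. \<Sum>p2\<in>?Q. Tk d k X p1 p2 / (of_nat d ^ k) * H (?m z1 p2) (?m z1 p1))"
    by (intro sum.cong refl sum_delta_inner finC)
  also have "\<dots> = (\<Sum>p1\<in>?Q. \<Sum>z1\<in>?C. \<Sum>p2\<in>?Q. Tk d k X p1 p2 / (of_nat d ^ k) * H (?m z1 p2) (?m z1 p1))"
    by (rule sum.swap)
  also have "\<dots> = (\<Sum>p1\<in>?Q. \<Sum>p2\<in>?Q. \<Sum>z1\<in>?C. Tk d k X p1 p2 / (of_nat d ^ k) * H (?m z1 p2) (?m z1 p1))"
    by (rule sum.cong[OF refl], rule sum.swap)
  also have "\<dots> = Fk n d k X H / (of_nat d ^ k)"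
    unfolding Fk_def by (simp add: sum_divide_distrib sum_distrib_left)
  finally show ?thesis .
qed


lemma merge_Suc: "merge {0..<Suc k} (w(k := a)) q = merge {0..<k} w (q(k := a))"
  unfolding merge_def by (rule ext) auto

lemma merge_upd: "merge {0..<k} w (q(k := a)) = (merge {0..<k} w q)(k := a)"
  unfolding merge_def by (rule ext) auto

lemma Tk_Suc: "Tk d (Suc k) X q1 q2 = (\<Sum>a<d. Tk d k X (q1(k := a)) (q2(k := a)))"
proof -
  have "Tk d (Suc k) X q1 q2 = (\<Sum>w\<in>Conf (insert k {0..<k}) d. X (merge {0..<Suc k} w q1) (merge {0..<Suc k} w q2))"
    unfolding Tk_def ptrace_def by (simp add: atLeast0_lessThan_Suc)
  also have "\<dots> = (\<Sum>a<d. \<Sum>w\<in>Conf {0..<k} d. X (merge {0..<Suc k} (w(k := a)) q1) (merge {0..<Suc k} (w(k := a)) q2))"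
    by (rule sum_insert_site) simp
  also have "\<dots> = (\<Sum>a<d. Tk d k X (q1(k := a)) (q2(k := a)))"
    unfolding Tk_def ptrace_def merge_Suc ..
  finally show ?thesis .
qed

lemma LYtriv:
  assumes kn: "k < n"
    and triv: "\<forall>x\<in>Conf {0..<n} d. \<forall>y\<in>Conf {0..<n} d. H x y = (if x k = y k then K (x(k := 0)) (y(k := 0)) else 0)"
  shows "of_nat d * Fk n d k X H = Fk n d (Suc k) X H"
proof -
  let ?A = "{0..<k}" and ?B = "{0..<n} - {0..<k}" and ?B' = "{0..<n} - {0..<Suc k}"
  let ?C = "Conf ?A d" and ?Q = "Conf ?B d" and ?Q' = "Conf ?B' d"
  define G where "G = (\<lambda>q2 q1. \<Sum>w\<in>?C. K (merge ?A w q2) (merge ?A w q1))"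
  have Bins: "?B = insert k ?B'" using kn by auto
  have kB': "k \<notin> ?B'" by simp
  have AB: "?A \<union> ?B = {0..<n}" using kn by auto
  have disj: "?A \<inter> ?B = {}" by auto
  have mem: "\<And>w q a. w \<in> ?C \<Longrightarrow> q \<in> ?Q' \<Longrightarrow> a < d \<Longrightarrow> merge ?A w (q(k := a)) \<in> Conf {0..<n} d"
  proof -
    fix w q a assume w: "w \<in> ?C" and q: "q \<in> ?Q'" and a: "a < d"
    have "q(k := a) \<in> Conf ?B d" using q a Bins unfolding Conf_def by auto
    then show "merge ?A w (q(k := a)) \<in> Conf {0..<n} d" using merge_in[OF disj w] AB by simp
  qed
  have qk: "\<And>q. q \<in> ?Q' \<Longrightarrow> q k = 0" unfolding Conf_def by simp
  have Hval: "\<And>w q1 q2 a b. w \<in> ?C \<Longrightarrow> q1 \<in> ?Q' \<Longrightarrow> q2 \<in> ?Q' \<Longrightarrow> a < d \<Longrightarrow> b < d \<Longrightarrow>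
     H (merge ?A w (q2(k := b))) (merge ?A w (q1(k := a))) = (if b = a then K (merge ?A w q2) (merge ?A w q1) else 0)"
  proof -
    fix w q1 q2 a b assume w: "w \<in> ?C" and q1: "q1 \<in> ?Q'" and q2: "q2 \<in> ?Q'" and a: "a < d" and b: "b < d"
    have x: "merge ?A w (q2(k := b)) \<in> Conf {0..<n} d" and y: "merge ?A w (q1(k := a)) \<in> Conf {0..<n} d"
      using mem w q1 q2 a b by auto
    have e1: "(merge ?A w (q2(k := b))) (k := 0) = merge ?A w q2"
      unfolding merge_upd using qk[OF q2] by (auto simp: merge_def)
    have e2: "(merge ?A w (q1(k := a))) (k := 0) = merge ?A w q1"
      unfolding merge_upd using qk[OF q1] by (auto simp: merge_def)
    have k1: "merge ?A w (q2(k := b)) k = b" "merge ?A w (q1(k := a)) k = a"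
      unfolding merge_def by auto
    show "H (merge ?A w (q2(k := b))) (merge ?A w (q1(k := a))) = (if b = a then K (merge ?A w q2) (merge ?A w q1) else 0)"
      using triv x y unfolding k1 e1 e2 by (metis e1 e2 k1)
  qed
  have Gsum: "\<And>q1 q2 a b. q1 \<in> ?Q' \<Longrightarrow> q2 \<in> ?Q' \<Longrightarrow> a < d \<Longrightarrow> b < d \<Longrightarrow>
     (\<Sum>w\<in>?C. H (merge ?A w (q2(k := b))) (merge ?A w (q1(k := a)))) = (if b = a then G q2 q1 else 0)"
    unfolding G_def using Hval by (simp cong: sum.cong)
  have step1: "\<And>q1 q2. q1 \<in> ?Q' \<Longrightarrow> q2 \<in> ?Q' \<Longrightarrow>
      (\<Sum>w\<in>Conf {0..<Suc k} d. H (merge {0..<Suc k} w q2) (merge {0..<Suc k} w q1)) = of_nat d * G q2 q1"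
  proof -
    fix q1 q2 assume q1: "q1 \<in> ?Q'" and q2: "q2 \<in> ?Q'"
    have "(\<Sum>w\<in>Conf {0..<Suc k} d. H (merge {0..<Suc k} w q2) (merge {0..<Suc k} w q1))
       = (\<Sum>w\<in>Conf (insert k ?A) d. H (merge {0..<Suc k} w q2) (merge {0..<Suc k} w q1))"
      by (simp add: atLeast0_lessThan_Suc)
    also have "\<dots> = (\<Sum>a<d. \<Sum>w\<in>?C. H (merge ?A w (q2(k := a))) (merge ?A w (q1(k := a))))"
      unfolding sum_insert_site[of k ?A, simplified] merge_Suc ..
    also have "\<dots> = (\<Sum>a<d. G q2 q1)"
      using Gsum[OF q1 q2] by (intro sum.cong refl) simp
    finally show "(\<Sum>w\<in>Conf {0..<Suc k} d. H (merge {0..<Suc k} w q2) (merge {0..<Suc k} w q1)) = of_nat d * G q2 q1"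
      by simp
  qed
  have "Fk n d k X H = (\<Sum>p1\<in>Conf (insert k ?B') d. \<Sum>p2\<in>Conf (insert k ?B') d.
      Tk d k X p1 p2 * (\<Sum>w\<in>?C. H (merge ?A w p2) (merge ?A w p1)))"
    unfolding Fk_def Bins ..
  also have "\<dots> = (\<Sum>a<d. \<Sum>q1\<in>?Q'. \<Sum>b<d. \<Sum>q2\<in>?Q'.
      Tk d k X (q1(k := a)) (q2(k := b)) * (\<Sum>w\<in>?C. H (merge ?A w (q2(k := b))) (merge ?A w (q1(k := a)))))"
    unfolding sum_insert_site[OF kB'] ..
  also have "\<dots> = (\<Sum>a<d. \<Sum>q1\<in>?Q'. \<Sum>b<d. \<Sum>q2\<in>?Q'.
      (if a = b then Tk d k X (q1(k := a)) (q2(k := b)) * G q2 q1 else 0))"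
    by (intro sum.cong refl) (simp add: Gsum)
  also have "\<dots> = (\<Sum>a<d. \<Sum>q1\<in>?Q'. \<Sum>q2\<in>?Q'. Tk d k X (q1(k := a)) (q2(k := a)) * G q2 q1)"
    by (intro sum.cong refl sum_delta_inner) auto
  also have "\<dots> = (\<Sum>q1\<in>?Q'. \<Sum>a<d. \<Sum>q2\<in>?Q'. Tk d k X (q1(k := a)) (q2(k := a)) * G q2 q1)"
    by (rule sum.swap)
  also have "\<dots> = (\<Sum>q1\<in>?Q'. \<Sum>q2\<in>?Q'. \<Sum>a<d. Tk d k X (q1(k := a)) (q2(k := a)) * G q2 q1)"
    by (rule sum.cong[OF refl], rule sum.swap)
  also have "\<dots> = (\<Sum>q1\<in>?Q'. \<Sum>q2\<in>?Q'. Tk d (Suc k) X q1 q2 * G q2 q1)"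
    unfolding Tk_Suc by (simp add: sum_distrib_right)
  finally have F1: "Fk n d k X H = (\<Sum>q1\<in>?Q'. \<Sum>q2\<in>?Q'. Tk d (Suc k) X q1 q2 * G q2 q1)" .
  have "Fk n d (Suc k) X H = (\<Sum>q1\<in>?Q'. \<Sum>q2\<in>?Q'. Tk d (Suc k) X q1 q2 * (of_nat d * G q2 q1))"
    unfolding Fk_def using step1 by (intro sum.cong refl) simp
  then show ?thesis unfolding F1 by (simp add: sum_distrib_left ac_simps)
qed


lemma LY0: "Yk d 0 X = X"
  unfolding Yk_def Tk_def by (simp add: ptrace_empty)

lemma LYn:
  assumes x: "x \<in> Conf {0..<n} d" and y: "y \<in> Conf {0..<n} d" and tr: "mtrace {0..<n} d X = 0"
  shows "Yk d n X x y = 0"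
proof (cases "\<forall>i<n. x i = y i")
  case False then show ?thesis unfolding Yk_def by (rule if_not_P)
next
  case True
  then have xy: "x = y" using Conf_eq_zero[OF x y] by simp
  have "Tk d n X x x = (\<Sum>z\<in>Conf {0..<n} d. X z z)"
    unfolding Tk_def ptrace_def
  proof (rule sum.cong[OF refl])
    fix z assume z: "z \<in> Conf {0..<n} d"
    have "merge {0..<n} z x = z" using z x unfolding merge_def Conf_def by (intro ext) auto
    then show "X (merge {0..<n} z x) (merge {0..<n} z x) = X z z" by simp
  qed
  then have "Tk d n X x x = 0" using tr unfolding mtrace_def by simp
  then show ?thesis unfolding Yk_def xy by simp
qed

definition emb :: "nat \<Rightarrow> config \<Rightarrow> (config \<Rightarrow> complex) \<Rightarrow> config \<Rightarrow> complex" where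
  "emb n w f = (\<lambda>x. if rz {0..<n} x = w then f (rz (UNIV - {0..<n}) x) else 0)"

lemma emb_merge:
  assumes z: "z \<in> Conf {0..<k} d" and p: "p \<in> Conf ({0..<n} - {0..<k}) d"
  shows "emb k w f (merge {0..<k} z p) = (if z = w then f p else 0)"
proof -
  have "rz {0..<k} (merge {0..<k} z p) = z" by (rule rz_merge1[OF z])
  moreover have "rz (UNIV - {0..<k}) (merge {0..<k} z p) = p"
    using p unfolding rz_def merge_def Conf_def by (intro ext) auto
  ultimately show ?thesis unfolding emb_def by (simp only:)
qed

lemma sum_delta_inner':
  assumes "z1 \<in> C" "finite C"
  shows "(\<Sum>z2\<in>C. \<Sum>p2\<in>Q. (if z2 = z1 then f z2 p2 else 0)) = (\<Sum>p2\<in>Q. f z1 p2)"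
proof -
  have "(\<Sum>z2\<in>C. \<Sum>p2\<in>Q. (if z2 = z1 then f z2 p2 else 0)) = (\<Sum>z2\<in>C. if z2 = z1 then (\<Sum>p2\<in>Q. f z2 p2) else 0)"
    by (intro sum.cong) auto
  also have "\<dots> = (\<Sum>p2\<in>Q. f z1 p2)" using assms by simp
  finally show ?thesis .
qed

lemma delta_sum:
  assumes "w \<in> C" "finite C" "\<And>z. z \<in> C \<Longrightarrow> z \<noteq> w \<Longrightarrow> g z = 0"
  shows "(\<Sum>z\<in>C. g z) = g w"
proof -
  have "(\<Sum>z\<in>C. g z) = g w + (\<Sum>z\<in>C - {w}. g z)" using assms by (simp add: sum.remove)
  also have "(\<Sum>z\<in>C - {w}. g z) = 0" using assms by (intro sum.neutral) auto
  finally show ?thesis by simp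
qed

lemma ip_embed:
  assumes kn: "k \<le> n" and w: "w \<in> Conf {0..<k} d"
  shows "ip (Conf {0..<n} d) (emb k w f) (app (Conf {0..<n} d) G (emb k w f)) =
    (\<Sum>p2\<in>Conf ({0..<n} - {0..<k}) d. \<Sum>p1\<in>Conf ({0..<n} - {0..<k}) d.
        cnj (f p2) * G (merge {0..<k} w p2) (merge {0..<k} w p1) * f p1)"
proof -
  let ?A = "{0..<k}" and ?B = "{0..<n} - {0..<k}"
  let ?C = "Conf ?A d" and ?Q = "Conf ?B d"
  let ?m = "merge ?A" and ?e = "emb k w f"
  have disj: "?A \<inter> ?B = {}" by auto
  have eq: "Conf {0..<n} d = Conf (?A \<union> ?B) d" using Conf_split_eq[OF kn] by simp
  have finC: "finite ?C" by (rule finite_Conf) simp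
  have "ip (Conf {0..<n} d) ?e (app (Conf {0..<n} d) G ?e) =
     (\<Sum>x\<in>Conf (?A \<union> ?B) d. \<Sum>y\<in>Conf (?A \<union> ?B) d. cnj (?e x) * G x y * ?e y)"
    unfolding ip_def app_def eq by (simp add: sum_distrib_left mult.assoc)
  also have "\<dots> = (\<Sum>z2\<in>?C. \<Sum>p2\<in>?Q. \<Sum>z1\<in>?C. \<Sum>p1\<in>?Q. cnj (?e (?m z2 p2)) * G (?m z2 p2) (?m z1 p1) * ?e (?m z1 p1))"
    unfolding sum_split[OF disj] ..
  also have "\<dots> = (\<Sum>z2\<in>?C. \<Sum>p2\<in>?Q. \<Sum>p1\<in>?Q. cnj (?e (?m z2 p2)) * G (?m z2 p2) (?m w p1) * ?e (?m w p1))"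
  proof (rule sum.cong[OF refl], rule sum.cong[OF refl])
    fix z2 p2 assume z2: "z2 \<in> ?C" and p2: "p2 \<in> ?Q"
    show "(\<Sum>z1\<in>?C. \<Sum>p1\<in>?Q. cnj (?e (?m z2 p2)) * G (?m z2 p2) (?m z1 p1) * ?e (?m z1 p1)) =
        (\<Sum>p1\<in>?Q. cnj (?e (?m z2 p2)) * G (?m z2 p2) (?m w p1) * ?e (?m w p1))"
      by (rule delta_sum[OF w finC]) (auto simp: emb_merge)
  qed
  also have "\<dots> = (\<Sum>p2\<in>?Q. \<Sum>p1\<in>?Q. cnj (?e (?m w p2)) * G (?m w p2) (?m w p1) * ?e (?m w p1))"
    by (rule delta_sum[OF w finC]) (auto simp: emb_merge)
  also have "\<dots> = (\<Sum>p2\<in>?Q. \<Sum>p1\<in>?Q. cnj (f p2) * G (?m w p2) (?m w p1) * f p1)"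
    using w by (intro sum.cong refl) (simp add: emb_merge)
  finally show ?thesis .
qed

lemma nrm2_embed:
  assumes kn: "k \<le> n" and w: "w \<in> Conf {0..<k} d"
  shows "nrm2 (Conf {0..<n} d) (emb k w f) = nrm2 (Conf ({0..<n} - {0..<k}) d) f"
proof -
  let ?A = "{0..<k}" and ?B = "{0..<n} - {0..<k}"
  let ?C = "Conf ?A d" and ?Q = "Conf ?B d"
  have disj: "?A \<inter> ?B = {}" by auto
  have eq: "Conf {0..<n} d = Conf (?A \<union> ?B) d" using Conf_split_eq[OF kn] by simp
  have finC: "finite ?C" by (rule finite_Conf) simp
  have "nrm2 (Conf {0..<n} d) (emb k w f) = (\<Sum>z\<in>?C. \<Sum>p\<in>?Q. (cmod (emb k w f (merge ?A z p)))^2)"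
    unfolding nrm2_def eq sum_split[OF disj] ..
  also have "\<dots> = (\<Sum>z\<in>?C. if z = w then (\<Sum>p\<in>?Q. (cmod (f p))^2) else 0)"
    by (intro sum.cong refl) (auto simp: emb_merge)
  also have "\<dots> = nrm2 ?Q f" unfolding nrm2_def using w finC by simp
  finally show ?thesis .
qed


lemma tn_nonneg:
  assumes kn: "k < n" and h: "herm (Conf {0..<n} d) X"
  shows "0 \<le> trace_norm ({0..<n} - {0..<k}) d (ptrace {0..<k} d X)"
proof -
  let ?B = "{0..<n} - {0..<k}"
  have finB: "finite ?B" by simp
  have hT: "herm (Conf ?B d) (ptrace {0..<k} d X)"
    using herm_ptrace[OF h, of "{0..<k}"] kn by simp
  obtain m lam u where o: "orthonormal (Conf ?B d) m u" and dc: "decomp (Conf ?B d) m lam u (ptrace {0..<k} d X)"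
    using spectral[OF finite_Conf[OF finB] hT] by blast
  show ?thesis unfolding trace_norm_formula[OF finB hT o dc] by (simp add: sum_nonneg)
qed

lemma LYbound:
  assumes kn: "k < n" and d0: "0 < d" and h: "herm (Conf {0..<n} d) X"
  shows "cmod (tr2 (Conf {0..<n} d) (Yk d k X) G) \<le>
    trace_norm ({0..<n} - {0..<k}) d (Tk d k X) * opn (Conf {0..<n} d) G"
proof -
  let ?A = "{0..<k}" and ?B = "{0..<n} - {0..<k}"
  let ?C = "Conf ?A d" and ?Q = "Conf ?B d" and ?CS = "Conf {0..<n} d"
  let ?m = "merge ?A"
  have finB: "finite ?B" by simp
  have finC: "finite ?C" by (rule finite_Conf) simp
  have finCS: "finite ?CS" by (rule finite_Conf) simp
  have hT: "herm ?Q (Tk d k X)"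
    unfolding Tk_def using herm_ptrace[OF h, of "{0..<k}"] kn by simp
  obtain m lam u where o: "orthonormal ?Q m u" and dc: "decomp ?Q m lam u (Tk d k X)"
    using spectral[OF finite_Conf[OF finB] hT] by blast
  have tn: "trace_norm ?B d (Tk d k X) = (\<Sum>j<m. \<bar>lam j\<bar>)"
    by (rule trace_norm_formula[OF finB hT o dc])
  define q where "q = (\<lambda>j w. ip ?CS (emb k w (u j)) (app ?CS G (emb k w (u j))))"
  have qexp: "\<And>j w. w \<in> ?C \<Longrightarrow> q j w = (\<Sum>p2\<in>?Q. \<Sum>p1\<in>?Q. cnj (u j p2) * G (?m w p2) (?m w p1) * u j p1)"
    unfolding q_def using kn by (intro ip_embed) auto
  have "Fk n d k X G = (\<Sum>p1\<in>?Q. \<Sum>p2\<in>?Q. (\<Sum>j<m. complex_of_real (lam j) * u j p1 * cnj (u j p2)) *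
       (\<Sum>w\<in>?C. G (?m w p2) (?m w p1)))"
    unfolding Fk_def using dc unfolding decomp_def by (intro sum.cong refl) simp
  also have "\<dots> = (\<Sum>p1\<in>?Q. \<Sum>p2\<in>?Q. \<Sum>j<m. \<Sum>w\<in>?C. complex_of_real (lam j) * (cnj (u j p2) * G (?m w p2) (?m w p1) * u j p1))"
  proof (rule sum.cong[OF refl], rule sum.cong[OF refl])
    fix p1 p2
    have "(\<Sum>j<m. complex_of_real (lam j) * u j p1 * cnj (u j p2)) * (\<Sum>w\<in>?C. G (?m w p2) (?m w p1))
      = (\<Sum>w\<in>?C. \<Sum>j<m. complex_of_real (lam j) * (cnj (u j p2) * G (?m w p2) (?m w p1) * u j p1))"
      by (simp add: sum_distrib_left sum_distrib_right ac_simps)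
    also have "\<dots> = (\<Sum>j<m. \<Sum>w\<in>?C. complex_of_real (lam j) * (cnj (u j p2) * G (?m w p2) (?m w p1) * u j p1))"
      by (rule sum.swap)
    finally show "(\<Sum>j<m. complex_of_real (lam j) * u j p1 * cnj (u j p2)) * (\<Sum>w\<in>?C. G (?m w p2) (?m w p1))
      = (\<Sum>j<m. \<Sum>w\<in>?C. complex_of_real (lam j) * (cnj (u j p2) * G (?m w p2) (?m w p1) * u j p1))" .
  qed
  also have "\<dots> = (\<Sum>p1\<in>?Q. \<Sum>j<m. \<Sum>p2\<in>?Q. \<Sum>w\<in>?C. complex_of_real (lam j) * (cnj (u j p2) * G (?m w p2) (?m w p1) * u j p1))"
    by (rule sum.cong[OF refl], rule sum.swap)
  also have "\<dots> = (\<Sum>j<m. \<Sum>p1\<in>?Q. \<Sum>p2\<in>?Q. \<Sum>w\<in>?C. complex_of_real (lam j) * (cnj (u j p2) * G (?m w p2) (?m w p1) * u j p1))"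
    by (rule sum.swap)
  also have "\<dots> = (\<Sum>j<m. \<Sum>p1\<in>?Q. \<Sum>w\<in>?C. \<Sum>p2\<in>?Q. complex_of_real (lam j) * (cnj (u j p2) * G (?m w p2) (?m w p1) * u j p1))"
    by (rule sum.cong[OF refl], rule sum.cong[OF refl], rule sum.swap)
  also have "\<dots> = (\<Sum>j<m. \<Sum>w\<in>?C. \<Sum>p1\<in>?Q. \<Sum>p2\<in>?Q. complex_of_real (lam j) * (cnj (u j p2) * G (?m w p2) (?m w p1) * u j p1))"
    by (rule sum.cong[OF refl], rule sum.swap)
  also have "\<dots> = (\<Sum>j<m. \<Sum>w\<in>?C. \<Sum>p2\<in>?Q. \<Sum>p1\<in>?Q. complex_of_real (lam j) * (cnj (u j p2) * G (?m w p2) (?m w p1) * u j p1))"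
    by (rule sum.cong[OF refl], rule sum.cong[OF refl], rule sum.swap)
  also have "\<dots> = (\<Sum>j<m. complex_of_real (lam j) * (\<Sum>w\<in>?C. q j w))"
    by (rule sum.cong[OF refl]) (simp add: qexp sum_distrib_left)
  finally have F: "Fk n d k X G = (\<Sum>j<m. complex_of_real (lam j) * (\<Sum>w\<in>?C. q j w))" .
  have qb: "\<And>j w. j < m \<Longrightarrow> w \<in> ?C \<Longrightarrow> cmod (q j w) \<le> opn ?CS G"
  proof -
    fix j w assume j: "j < m" and w: "w \<in> ?C"
    have "nrm2 ?Q (u j) = 1" using o j ip_self[of ?Q "u j"] unfolding orthonormal_def
      by (metis of_real_eq_1_iff)
    then have "nrm2 ?CS (emb k w (u j)) = 1" using nrm2_embed[of k n w d "u j"] kn w by simp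
    then show "cmod (q j w) \<le> opn ?CS G" unfolding q_def by (rule quad_bound[OF finCS])
  qed
  have "cmod (Fk n d k X G) \<le> (\<Sum>j<m. cmod (complex_of_real (lam j) * (\<Sum>w\<in>?C. q j w)))"
    unfolding F by (rule norm_sum)
  also have "\<dots> \<le> (\<Sum>j<m. \<bar>lam j\<bar> * (of_nat (card ?C) * opn ?CS G))"
  proof (rule sum_mono)
    fix j assume j: "j \<in> {..<m}"
    have "cmod (\<Sum>w\<in>?C. q j w) \<le> (\<Sum>w\<in>?C. cmod (q j w))" by (rule norm_sum)
    also have "\<dots> \<le> (\<Sum>w\<in>?C. opn ?CS G)" using qb j by (intro sum_mono) auto
    also have "\<dots> = of_nat (card ?C) * opn ?CS G" by simp
    finally show "cmod (complex_of_real (lam j) * (\<Sum>w\<in>?C. q j w)) \<le> \<bar>lam j\<bar> * (of_nat (card ?C) * opn ?CS G)"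
      by (simp add: norm_mult mult_left_mono)
  qed
  also have "\<dots> = real d ^ k * ((\<Sum>j<m. \<bar>lam j\<bar>) * opn ?CS G)"
    by (simp add: card_Conf sum_distrib_right sum_distrib_left ac_simps)
  finally have Fb: "cmod (Fk n d k X G) \<le> real d ^ k * ((\<Sum>j<m. \<bar>lam j\<bar>) * opn ?CS G)" .
  have "cmod (tr2 ?CS (Yk d k X) G) = cmod (Fk n d k X G) / real d ^ k"
    using LYF[of k n d X G] kn by (simp add: norm_divide norm_power)
  also have "\<dots> \<le> (\<Sum>j<m. \<bar>lam j\<bar>) * opn ?CS G"
    using Fb d0 by (simp add: divide_le_eq ac_simps)
  finally show ?thesis unfolding tn .
qed


lemma ne_imp_nonempty_aux: "a \<in> A \<Longrightarrow> A \<noteq> {}" by blast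

lemma opn_zero: "opn I (\<lambda>_ _. 0) = 0"
proof -
  have "{sqrt (nrm2 I (app I (\<lambda>_ _. 0) v)) | v. nrm2 I v \<le> 1} = {0}"
  proof -
    have e: "\<exists>v. nrm2 I v \<le> 1" by (rule exI[of _ "\<lambda>_. 0"]) (simp add: nrm2_def)
    show ?thesis using e unfolding app_def nrm2_def by auto
  qed
  then show ?thesis unfolding opn_def by simp
qed

lemma zero_witness: "self_adj S d (\<lambda>_ _. 0) \<and> acts_trivially S d i (\<lambda>_ _. 0)"
  unfolding self_adj_def acts_trivially_def by (auto intro: exI[of _ "\<lambda>_ _. 0"])

lemma Inf_le_half:
  assumes fin: "finite S" and i: "i \<in> S" and lip: "lip_const S d H \<le> 1"
  shows "Inf {op_norm S d (\<lambda>x y. H x y - H' x y) | H'. self_adj S d H' \<and> acts_trivially S d i H'} \<le> 1/2"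
proof -
  let ?f = "\<lambda>i. Inf {op_norm S d (\<lambda>x y. H x y - H' x y) | H'. self_adj S d H' \<and> acts_trivially S d i H'}"
  have "?f i \<le> Max (?f ` S)" using fin i by (intro Max_ge) auto
  then show ?thesis using lip unfolding lip_const_def by simp
qed

lemma key_bound:
  assumes n1: "1 \<le> n" and d2: "2 \<le> d" and sa: "self_adj {0..<n} d X" and tr: "mtrace {0..<n} d X = 0"
    and sH: "self_adj {0..<n} d H" and lip: "lip_const {0..<n} d H \<le> 1"
  shows "Re (mtrace {0..<n} d (mmult {0..<n} d X H)) \<le>
    (\<Sum>k<n. trace_norm ({0..<n} - {0..<k}) d (ptrace {0..<k} d X))"
proof -
  let ?S = "{0..<n}" and ?CS = "Conf {0..<n} d"
  define tn where "tn = (\<lambda>k. trace_norm ({0..<n} - {0..<k}) d (ptrace {0..<k} d X))"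
  define RHS where "RHS = (\<Sum>k<n. tn k)"
  have h: "herm ?CS X" using sa unfolding self_adj_herm .
  have d0: "0 < d" using d2 by simp
  have tn0: "\<And>k. k < n \<Longrightarrow> 0 \<le> tn k" unfolding tn_def using tn_nonneg[OF _ h] by blast
  have RHS0: "0 \<le> RHS" unfolding RHS_def using tn0 by (intro sum_nonneg) auto
  have gsum: "(\<Sum>k<n. if Suc k < n then tn (Suc k) else 0) \<le> RHS"
  proof -
    obtain n' where n': "n = Suc n'" using n1 by (cases n) auto
    have "(\<Sum>k<n. if Suc k < n then tn (Suc k) else 0) = (\<Sum>k<n'. tn (Suc k))"
      unfolding n' by (simp add: sum.lessThan_Suc)
    also have "\<dots> \<le> tn 0 + (\<Sum>k<n'. tn (Suc k))" using tn0[of 0] n' by simp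
    also have "\<dots> = RHS" unfolding RHS_def n' by (rule sum.lessThan_Suc_shift[symmetric])
    finally show ?thesis .
  qed
  have trXH: "mtrace ?S d (mmult ?S d X H) = tr2 ?CS X H" by (rule mtrace_mmult)
  have eps: "\<And>e. 0 < e \<Longrightarrow> Re (tr2 ?CS X H) \<le> (1 + 2 * e) * RHS"
  proof -
    fix e :: real assume e: "0 < e"
    have ex: "\<forall>k. \<exists>H'. k < n \<longrightarrow> (self_adj ?S d H' \<and> acts_trivially ?S d k H' \<and>
        op_norm ?S d (\<lambda>x y. H x y - H' x y) < 1/2 + e)"
    proof
      fix k
      show "\<exists>H'. k < n \<longrightarrow> (self_adj ?S d H' \<and> acts_trivially ?S d k H' \<and>
        op_norm ?S d (\<lambda>x y. H x y - H' x y) < 1/2 + e)"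
      proof (cases "k < n")
        case False then show ?thesis by blast
      next
        case True
        let ?I = "{op_norm ?S d (\<lambda>x y. H x y - H' x y) | H'. self_adj ?S d H' \<and> acts_trivially ?S d k H'}"
        have ne: "?I \<noteq> {}" using zero_witness by blast
        have "Inf ?I < 1/2 + e" using Inf_le_half[of ?S k d H] True lip e by simp
        then obtain v where "v \<in> ?I" "v < 1/2 + e" using cInf_lessD[OF ne] by blast
        then show ?thesis by blast
      qed
    qed
    obtain Hf where Hf: "\<And>k. k < n \<Longrightarrow> self_adj ?S d (Hf k) \<and> acts_trivially ?S d k (Hf k) \<and>
        op_norm ?S d (\<lambda>x y. H x y - Hf k x y) < 1/2 + e"
      using choice[OF ex] by blast
    define G where "G = (\<lambda>k x y. H x y - Hf k x y)"
    have opG: "\<And>k. k < n \<Longrightarrow> opn ?CS (G k) < 1/2 + e"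
      using Hf unfolding G_def op_norm_opn by blast
    have opG0: "\<And>k. 0 \<le> opn ?CS (G k)" by (rule opn_nonneg, rule finite_Conf) simp
    have same: "\<And>k. k < n \<Longrightarrow> tr2 ?CS (Yk d k X) (Hf k) = tr2 ?CS (Yk d (Suc k) X) (Hf k)"
    proof -
      fix k assume kn: "k < n"
      obtain K where K: "\<forall>x\<in>?CS. \<forall>y\<in>?CS. Hf k x y = (if x k = y k then K (x(k := 0)) (y(k := 0)) else 0)"
        using Hf[OF kn] unfolding acts_trivially_def by blast
      have F: "of_nat d * Fk n d k X (Hf k) = Fk n d (Suc k) X (Hf k)" by (rule LYtriv[OF kn K])
      have "tr2 ?CS (Yk d (Suc k) X) (Hf k) = Fk n d (Suc k) X (Hf k) / of_nat d ^ Suc k"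
        using LYF[of "Suc k" n d X] kn by simp
      also have "\<dots> = Fk n d k X (Hf k) / of_nat d ^ k" unfolding F[symmetric] using d0 by simp
      also have "\<dots> = tr2 ?CS (Yk d k X) (Hf k)" using LYF[of k n d X] kn by simp
      finally show "tr2 ?CS (Yk d k X) (Hf k) = tr2 ?CS (Yk d (Suc k) X) (Hf k)" by simp
    qed
    have Yn0: "\<And>B. tr2 ?CS (Yk d n X) B = 0"
      unfolding tr2_def using LYn[OF _ _ tr] by simp
    have "tr2 ?CS X H = tr2 ?CS (Yk d 0 X) H - tr2 ?CS (Yk d n X) H" unfolding LY0 Yn0 by simp
    also have "\<dots> = (\<Sum>k<n. tr2 ?CS (Yk d k X) H - tr2 ?CS (Yk d (Suc k) X) H)"
      by (rule sum_lessThan_telescope'[symmetric])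
    also have "\<dots> = (\<Sum>k<n. tr2 ?CS (Yk d k X) (G k) - tr2 ?CS (Yk d (Suc k) X) (G k))"
    proof (rule sum.cong[OF refl])
      fix k assume "k \<in> {..<n}"
      then have kn: "k < n" by simp
      show "tr2 ?CS (Yk d k X) H - tr2 ?CS (Yk d (Suc k) X) H = tr2 ?CS (Yk d k X) (G k) - tr2 ?CS (Yk d (Suc k) X) (G k)"
        unfolding G_def tr2_diff using same[OF kn] by simp
    qed
    finally have tel: "tr2 ?CS X H = (\<Sum>k<n. tr2 ?CS (Yk d k X) (G k) - tr2 ?CS (Yk d (Suc k) X) (G k))" .
    have tb: "\<And>k. k < n \<Longrightarrow> Re (tr2 ?CS (Yk d k X) (G k) - tr2 ?CS (Yk d (Suc k) X) (G k))
        \<le> (1/2 + e) * (tn k + (if Suc k < n then tn (Suc k) else 0))"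
    proof -
      fix k assume kn: "k < n"
      have b1: "cmod (tr2 ?CS (Yk d k X) (G k)) \<le> tn k * (1/2 + e)"
      proof -
        have "cmod (tr2 ?CS (Yk d k X) (G k)) \<le> tn k * opn ?CS (G k)"
          using LYbound[OF kn d0 h] unfolding tn_def Tk_def .
        also have "\<dots> \<le> tn k * (1/2 + e)" using opG[OF kn] tn0[OF kn] by (intro mult_left_mono) auto
        finally show ?thesis .
      qed
      have b2: "cmod (tr2 ?CS (Yk d (Suc k) X) (G k)) \<le> (if Suc k < n then tn (Suc k) else 0) * (1/2 + e)"
      proof (cases "Suc k < n")
        case True
        have "cmod (tr2 ?CS (Yk d (Suc k) X) (G k)) \<le> tn (Suc k) * opn ?CS (G k)"
          using LYbound[OF True d0 h] unfolding tn_def Tk_def .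
        also have "\<dots> \<le> tn (Suc k) * (1/2 + e)" using opG[OF kn] tn0[OF True] by (intro mult_left_mono) auto
        finally show ?thesis using True by simp
      next
        case False
        then have "Suc k = n" using kn by simp
        then show ?thesis using Yn0 by simp
      qed
      have "Re (tr2 ?CS (Yk d k X) (G k) - tr2 ?CS (Yk d (Suc k) X) (G k))
          \<le> cmod (tr2 ?CS (Yk d k X) (G k)) + cmod (tr2 ?CS (Yk d (Suc k) X) (G k))"
        by (metis abs_Re_le_cmod abs_le_D1 minus_complex.sel(1) norm_minus_commute norm_triangle_ineq4 order_trans)
      also have "\<dots> \<le> (1/2 + e) * (tn k + (if Suc k < n then tn (Suc k) else 0))"
        using b1 b2 by (simp add: algebra_simps)
      finally show "Re (tr2 ?CS (Yk d k X) (G k) - tr2 ?CS (Yk d (Suc k) X) (G k))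
        \<le> (1/2 + e) * (tn k + (if Suc k < n then tn (Suc k) else 0))" .
    qed
    have "Re (tr2 ?CS X H) = (\<Sum>k<n. Re (tr2 ?CS (Yk d k X) (G k) - tr2 ?CS (Yk d (Suc k) X) (G k)))"
      unfolding tel by simp
    also have "\<dots> \<le> (\<Sum>k<n. (1/2 + e) * (tn k + (if Suc k < n then tn (Suc k) else 0)))"
      using tb by (intro sum_mono) auto
    also have "\<dots> = (1/2 + e) * (RHS + (\<Sum>k<n. if Suc k < n then tn (Suc k) else 0))"
      unfolding RHS_def sum_distrib_left[symmetric] sum.distrib ..
    also have "\<dots> \<le> (1/2 + e) * (RHS + RHS)" using gsum e by (intro mult_left_mono) auto
    also have "\<dots> = (1 + 2 * e) * RHS" by (simp add: algebra_simps)
    finally show "Re (tr2 ?CS X H) \<le> (1 + 2 * e) * RHS" .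
  qed
  have "Re (tr2 ?CS X H) \<le> RHS"
  proof (rule field_le_epsilon)
    fix e :: real assume e: "0 < e"
    define e' where "e' = e / (2 * RHS + 2)"
    have e'p: "0 < e'" unfolding e'_def using e RHS0 by simp
    have "Re (tr2 ?CS X H) \<le> (1 + 2 * e') * RHS" by (rule eps[OF e'p])
    also have "\<dots> = RHS + e * (RHS / (RHS + 1))" unfolding e'_def using RHS0
      by (simp add: field_simps)
    also have "\<dots> \<le> RHS + e * 1" using RHS0 e by (intro add_left_mono mult_left_mono) auto
    finally show "Re (tr2 ?CS X H) \<le> RHS + e" by simp
  qed
  then show ?thesis unfolding trXH RHS_def tn_def .
qed

theorem mainTheorem8:
  fixes n d :: nat and X :: qop
  assumes "1 \<le> n" and "2 \<le> d"
    and "self_adj {0..<n} d X" and "mtrace {0..<n} d X = 0"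
  shows "W1 {0..<n} d X \<le>
    (\<Sum>k<n. trace_norm ({0..<n} - {0..<k}) d (ptrace {0..<k} d X))"
proof -
  let ?S = "{0..<n}"
  let ?W = "{Re (mtrace ?S d (mmult ?S d X H)) | H. self_adj ?S d H \<and> lip_const ?S d H \<le> 1}"
  have lip0: "lip_const ?S d (\<lambda>_ _. 0) \<le> 1"
  proof -
    have "\<And>i. i \<in> ?S \<Longrightarrow> Inf {op_norm ?S d (\<lambda>x y. (\<lambda>_ _. 0) x y - H' x y) | H'. self_adj ?S d H' \<and> acts_trivially ?S d i H'} \<le> 0"
    proof -
      fix i assume i: "i \<in> ?S"
      let ?I = "{op_norm ?S d (\<lambda>x y. (\<lambda>_ _. 0) x y - H' x y) | H'. self_adj ?S d H' \<and> acts_trivially ?S d i H'}"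
      have bdd: "bdd_below ?I" unfolding bdd_below_def
      proof (rule exI[of _ 0], rule ballI)
        fix x assume "x \<in> ?I"
        then obtain H' where "x = op_norm ?S d (\<lambda>x y. (\<lambda>_ _. 0) x y - H' x y)" by blast
        then show "0 \<le> x" unfolding op_norm_opn using opn_nonneg[OF finite_Conf[of ?S d]] by simp
      qed
      have "op_norm ?S d (\<lambda>x y. (\<lambda>_ _. 0) x y - (\<lambda>_ _. 0) x y) \<in> ?I"
        unfolding mem_Collect_eq by (rule exI[of _ "\<lambda>_ _. 0"]) (simp add: zero_witness)
      moreover have "op_norm ?S d (\<lambda>x y. (\<lambda>_ _. 0) x y - (\<lambda>_ _. 0) x y) = 0"
        unfolding op_norm_opn by (simp add: opn_zero)
      ultimately show "Inf ?I \<le> 0" using cInf_lower[of _ ?I, OF _ bdd] by simp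
    qed
    moreover have "?S \<noteq> {}" using assms(1) by auto
    ultimately have "Max ((\<lambda>i. Inf {op_norm ?S d (\<lambda>x y. (\<lambda>_ _. 0) x y - H' x y) | H'. self_adj ?S d H' \<and> acts_trivially ?S d i H'}) ` ?S) \<le> 0"
      by (intro Max.boundedI) auto
    then show ?thesis unfolding lip_const_def by simp
  qed
  have ne: "?W \<noteq> {}"
  proof -
    have "Re (mtrace ?S d (mmult ?S d X (\<lambda>_ _. 0))) \<in> ?W"
      unfolding mem_Collect_eq by (rule exI[of _ "\<lambda>_ _. 0"]) (simp add: zero_witness lip0)
    then show ?thesis by (rule ne_imp_nonempty_aux)
  qed
  show ?thesis unfolding W1_def
  proof (rule cSup_least[OF ne])
    fix w assume "w \<in> ?W"
    then obtain H where w: "w = Re (mtrace ?S d (mmult ?S d X H))" and hH: "self_adj ?S d H"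
      and lH: "lip_const ?S d H \<le> 1" by blast
    show "w \<le> (\<Sum>k<n. trace_norm (?S - {0..<k}) d (ptrace {0..<k} d X))"
      unfolding w by (rule key_bound[OF assms hH lH])
  qed
qed


end
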